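(* Let $F\colon\mathbb{A}\to\mathbb{B}$ be a double functor. Then $F$ is a double trivial fibration if and only if both $\mathbf{H}F\colon\mathbf{H}\mathbb{A}\to\mathbf{H}\mathbb{B}$ and $\mathcal{V}F\colon\mathcal{V}\mathbb{A}\to\mathcal{V}\mathbb{B}$ are trivial fibrations in the Lack model structure on $2\mathrm{Cat}$ (i.e.\ 2-functors that are both biequivalences and Lack fibrations).
   Context: A double category has objects, horizontal morphisms, vertical morphisms and squares; a square $\alpha\colon(u\,{}^{a}_{b}\,v)$ has top horizontal boundary $a\colon A\to B$, bottom $b\colon A'\to B'$, left vertical boundary $u\colon A\to A'$ and right $v\colon B\to B'$; $e_A$ is the vertical identity on $A$. $\mathbf{H}\mathbb{A}$ is the underlying horizontal 2-category (objects, horizontal morphisms, and as 2-cells $a\Rightarrow b$ the squares $(e_A\,{}^{a}_{b}\,e_B)$). $\mathcal{V}\mathbb{A}$ is the 2-category whose objects are vertical morphisms of $\mathbb{A}$, morphisms $u\to v$ are squares with left boundary $u$ and right boundary $v$, and 2-cells from $\alpha\colon(u\,{}^{a}_{b}\,v)$ to $\beta\colon(u\,{}^{c}_{d}\,v)$ are pairs of squares $\sigma_0\colon(e_A\,{}^{a}_{c}\,e_B)$, $\sigma_1\colon(e_{A'}\,{}^{b}_{d}\,e_{B'})$ with $\sigma_0$ on top of $\beta$ equal to $\alpha$ on top of $\sigma_1$. A 2-functor $G\colon\mathcal{A}\to\mathcal{B}$ is a biequivalence if it is essentially surjective up to equivalence on objects, essentially full up to invertible 2-cell on morphisms, and fully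 faithful on 2-cells; it is a Lack fibration if equivalences $b\colon B\to GC$ lift to equivalences $a\colon A\to C$ with $Ga=b$, and invertible 2-cells $\beta\colon b\cong Gc$ lift to invertible 2-cells $\alpha\colon a\cong c$ with $G\alpha=\beta$. A double functor $F\colon\mathbb{A}\to\mathbb{B}$ is a double trivial fibration if (dt1) it is surjective on objects; (dt2) for every horizontal morphism $b\colon FA\to FC$ there is a horizontal morphism $a\colon A\to C$ with $Fa=b$; (dt3) every vertical morphism of $\mathbb{B}$ is of the form $Fu$ for some vertical morphism $u$ of $\mathbb{A}$; (dt4) for every square $\beta\colon(Fu\,{}^{Fa}_{Fc}\,Fu')$ in $\mathbb{B}$ there is a unique square $\alpha\colon(u\,{}^{a}_{c}\,u')$ in $\mathbb{A}$ with $F\alpha=\beta$. *)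

theory Defs
  imports Main
begin

section \<open>Strict double categories\<close>

text \<open>All compositions are written in diagrammatic order:
  hcomp a b : a followed by b (horizontal morphisms);
  vcomp u v : u followed by v (vertical morphisms);
  shcomp \<alpha> \<beta> : \<alpha> placed to the left of \<beta> (horizontal pasting of squares);
  svcomp \<alpha> \<beta> : \<alpha> placed on top of \<beta> (vertical pasting of squares).
  shid u is the horizontal identity square (u, 1, 1, u) on a vertical morphism u;
  svid a is the vertical identity square (e, a, a, e) on a horizontal morphism a.\<close>

record ('o,'h,'v,'s) dblcat =
  Obj :: "'o set"
  Hor :: "'h set"
  Ver :: "'v set"
  Sq  :: "'s set"
  hdom :: "'h \<Rightarrow> 'o"
  hcod :: "'h \<Rightarrow> 'o"
  hcomp :: "'h \<Rightarrow> 'h \<Rightarrow> 'h"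
  hid :: "'o \<Rightarrow> 'h"
  vdom :: "'v \<Rightarrow> 'o"
  vcod :: "'v \<Rightarrow> 'o"
  vcomp :: "'v \<Rightarrow> 'v \<Rightarrow> 'v"
  vid :: "'o \<Rightarrow> 'v"
  stop :: "'s \<Rightarrow> 'h"
  sbot :: "'s \<Rightarrow> 'h"
  sleft :: "'s \<Rightarrow> 'v"
  sright :: "'s \<Rightarrow> 'v"
  shcomp :: "'s \<Rightarrow> 's \<Rightarrow> 's"
  svcomp :: "'s \<Rightarrow> 's \<Rightarrow> 's"
  shid :: "'v \<Rightarrow> 's"
  svid :: "'h \<Rightarrow> 's"

definition is_dblcat :: "('o,'h,'v,'s,'z) dblcat_scheme \<Rightarrow> bool" where
  "is_dblcat A \<longleftrightarrow>
   \<comment> \<open>horizontal category\<close>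
   (\<forall>a\<in>Hor A. hdom A a \<in> Obj A \<and> hcod A a \<in> Obj A) \<and>
   (\<forall>x\<in>Obj A. hid A x \<in> Hor A \<and> hdom A (hid A x) = x \<and> hcod A (hid A x) = x) \<and>
   (\<forall>a\<in>Hor A. \<forall>b\<in>Hor A. hcod A a = hdom A b \<longrightarrow>
      hcomp A a b \<in> Hor A \<and> hdom A (hcomp A a b) = hdom A a \<and> hcod A (hcomp A a b) = hcod A b) \<and>
   (\<forall>a\<in>Hor A. hcomp A (hid A (hdom A a)) a = a \<and> hcomp A a (hid A (hcod A a)) = a) \<and>
   (\<forall>a\<in>Hor A. \<forall>b\<in>Hor A. \<forall>c\<in>Hor A. hcod A a = hdom A b \<longrightarrow> hcod A b = hdom A c \<longrightarrow>
      hcomp A (hcomp A a b) c = hcomp A a (hcomp A b c)) \<and>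
   \<comment> \<open>vertical category\<close>
   (\<forall>u\<in>Ver A. vdom A u \<in> Obj A \<and> vcod A u \<in> Obj A) \<and>
   (\<forall>x\<in>Obj A. vid A x \<in> Ver A \<and> vdom A (vid A x) = x \<and> vcod A (vid A x) = x) \<and>
   (\<forall>u\<in>Ver A. \<forall>v\<in>Ver A. vcod A u = vdom A v \<longrightarrow>
      vcomp A u v \<in> Ver A \<and> vdom A (vcomp A u v) = vdom A u \<and> vcod A (vcomp A u v) = vcod A v) \<and>
   (\<forall>u\<in>Ver A. vcomp A (vid A (vdom A u)) u = u \<and> vcomp A u (vid A (vcod A u)) = u) \<and>
   (\<forall>u\<in>Ver A. \<forall>v\<in>Ver A. \<forall>w\<in>Ver A. vcod A u = vdom A v \<longrightarrow> vcod A v = vdom A w \<longrightarrow>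
      vcomp A (vcomp A u v) w = vcomp A u (vcomp A v w)) \<and>
   \<comment> \<open>boundaries of squares\<close>
   (\<forall>\<alpha>\<in>Sq A. stop A \<alpha> \<in> Hor A \<and> sbot A \<alpha> \<in> Hor A \<and> sleft A \<alpha> \<in> Ver A \<and> sright A \<alpha> \<in> Ver A \<and>
      hdom A (stop A \<alpha>) = vdom A (sleft A \<alpha>) \<and> hcod A (stop A \<alpha>) = vdom A (sright A \<alpha>) \<and>
      hdom A (sbot A \<alpha>) = vcod A (sleft A \<alpha>) \<and> hcod A (sbot A \<alpha>) = vcod A (sright A \<alpha>)) \<and>
   \<comment> \<open>horizontal composition of squares\<close>
   (\<forall>\<alpha>\<in>Sq A. \<forall>\<beta>\<in>Sq A. sright A \<alpha> = sleft A \<beta> \<longrightarrow>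
      shcomp A \<alpha> \<beta> \<in> Sq A \<and> sleft A (shcomp A \<alpha> \<beta>) = sleft A \<alpha> \<and> sright A (shcomp A \<alpha> \<beta>) = sright A \<beta> \<and>
      stop A (shcomp A \<alpha> \<beta>) = hcomp A (stop A \<alpha>) (stop A \<beta>) \<and>
      sbot A (shcomp A \<alpha> \<beta>) = hcomp A (sbot A \<alpha>) (sbot A \<beta>)) \<and>
   (\<forall>u\<in>Ver A. shid A u \<in> Sq A \<and> sleft A (shid A u) = u \<and> sright A (shid A u) = u \<and>
      stop A (shid A u) = hid A (vdom A u) \<and> sbot A (shid A u) = hid A (vcod A u)) \<and>
   (\<forall>\<alpha>\<in>Sq A. shcomp A (shid A (sleft A \<alpha>)) \<alpha> = \<alpha> \<and> shcomp A \<alpha> (shid A (sright A \<alpha>)) = \<alpha>) \<and>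
   (\<forall>\<alpha>\<in>Sq A. \<forall>\<beta>\<in>Sq A. \<forall>\<gamma>\<in>Sq A. sright A \<alpha> = sleft A \<beta> \<longrightarrow> sright A \<beta> = sleft A \<gamma> \<longrightarrow>
      shcomp A (shcomp A \<alpha> \<beta>) \<gamma> = shcomp A \<alpha> (shcomp A \<beta> \<gamma>)) \<and>
   \<comment> \<open>vertical composition of squares\<close>
   (\<forall>\<alpha>\<in>Sq A. \<forall>\<beta>\<in>Sq A. sbot A \<alpha> = stop A \<beta> \<longrightarrow>
      svcomp A \<alpha> \<beta> \<in> Sq A \<and> stop A (svcomp A \<alpha> \<beta>) = stop A \<alpha> \<and> sbot A (svcomp A \<alpha> \<beta>) = sbot A \<beta> \<and>
      sleft A (svcomp A \<alpha> \<beta>) = vcomp A (sleft A \<alpha>) (sleft A \<beta>) \<and>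
      sright A (svcomp A \<alpha> \<beta>) = vcomp A (sright A \<alpha>) (sright A \<beta>)) \<and>
   (\<forall>a\<in>Hor A. svid A a \<in> Sq A \<and> stop A (svid A a) = a \<and> sbot A (svid A a) = a \<and>
      sleft A (svid A a) = vid A (hdom A a) \<and> sright A (svid A a) = vid A (hcod A a)) \<and>
   (\<forall>\<alpha>\<in>Sq A. svcomp A (svid A (stop A \<alpha>)) \<alpha> = \<alpha> \<and> svcomp A \<alpha> (svid A (sbot A \<alpha>)) = \<alpha>) \<and>
   (\<forall>\<alpha>\<in>Sq A. \<forall>\<beta>\<in>Sq A. \<forall>\<gamma>\<in>Sq A. sbot A \<alpha> = stop A \<beta> \<longrightarrow> sbot A \<beta> = stop A \<gamma> \<longrightarrow>
      svcomp A (svcomp A \<alpha> \<beta>) \<gamma> = svcomp A \<alpha> (svcomp A \<beta> \<gamma>)) \<and>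
   \<comment> \<open>compatibilities and interchange\<close>
   (\<forall>x\<in>Obj A. shid A (vid A x) = svid A (hid A x)) \<and>
   (\<forall>u\<in>Ver A. \<forall>v\<in>Ver A. vcod A u = vdom A v \<longrightarrow>
      shid A (vcomp A u v) = svcomp A (shid A u) (shid A v)) \<and>
   (\<forall>a\<in>Hor A. \<forall>b\<in>Hor A. hcod A a = hdom A b \<longrightarrow>
      svid A (hcomp A a b) = shcomp A (svid A a) (svid A b)) \<and>
   (\<forall>\<alpha>\<in>Sq A. \<forall>\<beta>\<in>Sq A. \<forall>\<gamma>\<in>Sq A. \<forall>\<delta>\<in>Sq A.
      sright A \<alpha> = sleft A \<beta> \<longrightarrow> sright A \<gamma> = sleft A \<delta> \<longrightarrow>
      sbot A \<alpha> = stop A \<gamma> \<longrightarrow> sbot A \<beta> = stop A \<delta> \<longrightarrow>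
      svcomp A (shcomp A \<alpha> \<beta>) (shcomp A \<gamma> \<delta>) = shcomp A (svcomp A \<alpha> \<gamma>) (svcomp A \<beta> \<delta>))"

record ('o1,'h1,'v1,'s1,'o2,'h2,'v2,'s2) dblfun =
  fO :: "'o1 \<Rightarrow> 'o2"
  fH :: "'h1 \<Rightarrow> 'h2"
  fV :: "'v1 \<Rightarrow> 'v2"
  fS :: "'s1 \<Rightarrow> 's2"

definition is_dblfun ::
  "('o1,'h1,'v1,'s1) dblcat \<Rightarrow> ('o2,'h2,'v2,'s2) dblcat \<Rightarrow>
   ('o1,'h1,'v1,'s1,'o2,'h2,'v2,'s2) dblfun \<Rightarrow> bool" where
  "is_dblfun A B F \<longleftrightarrow>
   (\<forall>x\<in>Obj A. fO F x \<in> Obj B) \<and>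
   (\<forall>a\<in>Hor A. fH F a \<in> Hor B \<and> hdom B (fH F a) = fO F (hdom A a) \<and> hcod B (fH F a) = fO F (hcod A a)) \<and>
   (\<forall>u\<in>Ver A. fV F u \<in> Ver B \<and> vdom B (fV F u) = fO F (vdom A u) \<and> vcod B (fV F u) = fO F (vcod A u)) \<and>
   (\<forall>\<alpha>\<in>Sq A. fS F \<alpha> \<in> Sq B \<and> stop B (fS F \<alpha>) = fH F (stop A \<alpha>) \<and> sbot B (fS F \<alpha>) = fH F (sbot A \<alpha>) \<and>
      sleft B (fS F \<alpha>) = fV F (sleft A \<alpha>) \<and> sright B (fS F \<alpha>) = fV F (sright A \<alpha>)) \<and>
   (\<forall>x\<in>Obj A. fH F (hid A x) = hid B (fO F x) \<and> fV F (vid A x) = vid B (fO F x)) \<and>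
   (\<forall>a\<in>Hor A. \<forall>b\<in>Hor A. hcod A a = hdom A b \<longrightarrow> fH F (hcomp A a b) = hcomp B (fH F a) (fH F b)) \<and>
   (\<forall>u\<in>Ver A. \<forall>v\<in>Ver A. vcod A u = vdom A v \<longrightarrow> fV F (vcomp A u v) = vcomp B (fV F u) (fV F v)) \<and>
   (\<forall>u\<in>Ver A. fS F (shid A u) = shid B (fV F u)) \<and>
   (\<forall>a\<in>Hor A. fS F (svid A a) = svid B (fH F a)) \<and>
   (\<forall>\<alpha>\<in>Sq A. \<forall>\<beta>\<in>Sq A. sright A \<alpha> = sleft A \<beta> \<longrightarrow> fS F (shcomp A \<alpha> \<beta>) = shcomp B (fS F \<alpha>) (fS F \<beta>)) \<and>
   (\<forall>\<alpha>\<in>Sq A. \<forall>\<beta>\<in>Sq A. sbot A \<alpha> = stop A \<beta> \<longrightarrow> fS F (svcomp A \<alpha> \<beta>) = svcomp B (fS F \<alpha>) (fS F \<beta>))"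

definition double_trivial_fibration ::
  "('o1,'h1,'v1,'s1) dblcat \<Rightarrow> ('o2,'h2,'v2,'s2) dblcat \<Rightarrow>
   ('o1,'h1,'v1,'s1,'o2,'h2,'v2,'s2) dblfun \<Rightarrow> bool" where
  "double_trivial_fibration A B F \<longleftrightarrow>
   \<comment> \<open>(dt1)\<close>
   (\<forall>y\<in>Obj B. \<exists>x\<in>Obj A. fO F x = y) \<and>
   \<comment> \<open>(dt2)\<close>
   (\<forall>x\<in>Obj A. \<forall>z\<in>Obj A. \<forall>b\<in>Hor B. hdom B b = fO F x \<longrightarrow> hcod B b = fO F z \<longrightarrow>
      (\<exists>a\<in>Hor A. hdom A a = x \<and> hcod A a = z \<and> fH F a = b)) \<and>
   \<comment> \<open>(dt3)\<close>
   (\<forall>v\<in>Ver B. \<exists>u\<in>Ver A. fV F u = v) \<and>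
   \<comment> \<open>(dt4)\<close>
   (\<forall>u\<in>Ver A. \<forall>u'\<in>Ver A. \<forall>a\<in>Hor A. \<forall>c\<in>Hor A.
      hdom A a = vdom A u \<longrightarrow> hcod A a = vdom A u' \<longrightarrow>
      hdom A c = vcod A u \<longrightarrow> hcod A c = vcod A u' \<longrightarrow>
      (\<forall>\<beta>\<in>Sq B. sleft B \<beta> = fV F u \<longrightarrow> sright B \<beta> = fV F u' \<longrightarrow>
         stop B \<beta> = fH F a \<longrightarrow> sbot B \<beta> = fH F c \<longrightarrow>
         (\<exists>!\<alpha>. \<alpha> \<in> Sq A \<and> sleft A \<alpha> = u \<and> sright A \<alpha> = u' \<and> stop A \<alpha> = a \<and> sbot A \<alpha> = c
               \<and> fS F \<alpha> = \<beta>)))"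

section \<open>2-categories (data) and 2-functors\<close>

text \<open>Compositions again diagrammatic: mcomp f g is f followed by g; ccompv \<theta> \<psi> is the
  vertical composite of \<theta> followed by \<psi>; ccomph is horizontal composition of 2-cells.\<close>

record ('o,'m,'c) twocat =
  TObj :: "'o set"
  TMor :: "'m set"
  TCell :: "'c set"
  mdom :: "'m \<Rightarrow> 'o"
  mcod :: "'m \<Rightarrow> 'o"
  mcomp :: "'m \<Rightarrow> 'm \<Rightarrow> 'm"
  mid :: "'o \<Rightarrow> 'm"
  cdom :: "'c \<Rightarrow> 'm"
  ccod :: "'c \<Rightarrow> 'm"
  ccompv :: "'c \<Rightarrow> 'c \<Rightarrow> 'c"
  ccomph :: "'c \<Rightarrow> 'c \<Rightarrow> 'c"
  cid :: "'m \<Rightarrow> 'c"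

record ('o1,'m1,'c1,'o2,'m2,'c2) twofun =
  G0 :: "'o1 \<Rightarrow> 'o2"
  G1 :: "'m1 \<Rightarrow> 'm2"
  G2 :: "'c1 \<Rightarrow> 'c2"

definition is_mor :: "('o,'m,'c) twocat \<Rightarrow> 'm \<Rightarrow> 'o \<Rightarrow> 'o \<Rightarrow> bool" where
  "is_mor C f x y \<longleftrightarrow> f \<in> TMor C \<and> mdom C f = x \<and> mcod C f = y"

definition is_cell :: "('o,'m,'c) twocat \<Rightarrow> 'c \<Rightarrow> 'm \<Rightarrow> 'm \<Rightarrow> bool" where
  "is_cell C \<theta> f g \<longleftrightarrow> \<theta> \<in> TCell C \<and> cdom C \<theta> = f \<and> ccod C \<theta> = g"

definition invertible_cell :: "('o,'m,'c) twocat \<Rightarrow> 'c \<Rightarrow> bool" where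
  "invertible_cell C \<theta> \<longleftrightarrow> \<theta> \<in> TCell C \<and>
     (\<exists>\<psi>. is_cell C \<psi> (ccod C \<theta>) (cdom C \<theta>) \<and>
          ccompv C \<theta> \<psi> = cid C (cdom C \<theta>) \<and> ccompv C \<psi> \<theta> = cid C (ccod C \<theta>))"

definition iso_mor :: "('o,'m,'c) twocat \<Rightarrow> 'm \<Rightarrow> 'm \<Rightarrow> bool" where
  "iso_mor C f g \<longleftrightarrow> (\<exists>\<theta>. is_cell C \<theta> f g \<and> invertible_cell C \<theta>)"

definition equivalence :: "('o,'m,'c) twocat \<Rightarrow> 'm \<Rightarrow> bool" where
  "equivalence C f \<longleftrightarrow> f \<in> TMor C \<and>
     (\<exists>g. is_mor C g (mcod C f) (mdom C f) \<and>
          iso_mor C (mcomp C f g) (mid C (mdom C f)) \<and>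
          iso_mor C (mcomp C g f) (mid C (mcod C f)))"

definition biequivalence ::
  "('o1,'m1,'c1) twocat \<Rightarrow> ('o2,'m2,'c2) twocat \<Rightarrow> ('o1,'m1,'c1,'o2,'m2,'c2) twofun \<Rightarrow> bool" where
  "biequivalence C D G \<longleftrightarrow>
   \<comment> \<open>essentially surjective up to equivalence on objects\<close>
   (\<forall>y\<in>TObj D. \<exists>x\<in>TObj C. \<exists>e. is_mor D e (G0 G x) y \<and> equivalence D e) \<and>
   \<comment> \<open>essentially full up to invertible 2-cell on morphisms\<close>
   (\<forall>x\<in>TObj C. \<forall>x'\<in>TObj C. \<forall>g. is_mor D g (G0 G x) (G0 G x') \<longrightarrow>
      (\<exists>f. is_mor C f x x' \<and> iso_mor D (G1 G f) g)) \<and>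
   \<comment> \<open>fully faithful on 2-cells\<close>
   (\<forall>f f' \<theta>. f \<in> TMor C \<longrightarrow> f' \<in> TMor C \<longrightarrow> mdom C f = mdom C f' \<longrightarrow> mcod C f = mcod C f' \<longrightarrow>
      is_cell D \<theta> (G1 G f) (G1 G f') \<longrightarrow> (\<exists>!\<phi>. is_cell C \<phi> f f' \<and> G2 G \<phi> = \<theta>))"

definition lack_fibration ::
  "('o1,'m1,'c1) twocat \<Rightarrow> ('o2,'m2,'c2) twocat \<Rightarrow> ('o1,'m1,'c1,'o2,'m2,'c2) twofun \<Rightarrow> bool" where
  "lack_fibration C D G \<longleftrightarrow>
   (\<forall>c\<in>TObj C. \<forall>b. b \<in> TMor D \<longrightarrow> mcod D b = G0 G c \<longrightarrow> equivalence D b \<longrightarrow>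
      (\<exists>a. a \<in> TMor C \<and> mcod C a = c \<and> equivalence C a \<and> G1 G a = b)) \<and>
   (\<forall>c\<in>TMor C. \<forall>\<beta>. \<beta> \<in> TCell D \<longrightarrow> ccod D \<beta> = G1 G c \<longrightarrow> invertible_cell D \<beta> \<longrightarrow>
      (\<exists>\<alpha>. \<alpha> \<in> TCell C \<and> ccod C \<alpha> = c \<and> invertible_cell C \<alpha> \<and> G2 G \<alpha> = \<beta>))"

definition lack_trivial_fibration ::
  "('o1,'m1,'c1) twocat \<Rightarrow> ('o2,'m2,'c2) twocat \<Rightarrow> ('o1,'m1,'c1,'o2,'m2,'c2) twofun \<Rightarrow> bool" where
  "lack_trivial_fibration C D G \<longleftrightarrow> biequivalence C D G \<and> lack_fibration C D G"

section \<open>The 2-categories H A and V A, and the induced 2-functors\<close>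

definition Hcat :: "('o,'h,'v,'s) dblcat \<Rightarrow> ('o,'h,'s) twocat" where
  "Hcat A = \<lparr> TObj = Obj A, TMor = Hor A,
     TCell = {\<sigma> \<in> Sq A. sleft A \<sigma> = vid A (hdom A (stop A \<sigma>)) \<and> sright A \<sigma> = vid A (hcod A (stop A \<sigma>))},
     mdom = hdom A, mcod = hcod A, mcomp = hcomp A, mid = hid A,
     cdom = stop A, ccod = sbot A, ccompv = svcomp A, ccomph = shcomp A, cid = svid A \<rparr>"

text \<open>A 2-cell of V A is recorded as a quadruple (\<alpha>, \<beta>, \<sigma>0, \<sigma>1): source, target, and the
  pair of globular squares.\<close>

definition Vcat :: "('o,'h,'v,'s) dblcat \<Rightarrow> ('v,'s,'s\<times>'s\<times>'s\<times>'s) twocat" where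
  "Vcat A = \<lparr> TObj = Ver A, TMor = Sq A,
     TCell = {(\<alpha>,\<beta>,\<sigma>0,\<sigma>1). \<alpha> \<in> Sq A \<and> \<beta> \<in> Sq A \<and> sleft A \<alpha> = sleft A \<beta> \<and> sright A \<alpha> = sright A \<beta> \<and>
        \<sigma>0 \<in> Sq A \<and> sleft A \<sigma>0 = vid A (hdom A (stop A \<alpha>)) \<and> sright A \<sigma>0 = vid A (hcod A (stop A \<alpha>)) \<and>
          stop A \<sigma>0 = stop A \<alpha> \<and> sbot A \<sigma>0 = stop A \<beta> \<and>
        \<sigma>1 \<in> Sq A \<and> sleft A \<sigma>1 = vid A (hdom A (sbot A \<alpha>)) \<and> sright A \<sigma>1 = vid A (hcod A (sbot A \<alpha>)) \<and>
          stop A \<sigma>1 = sbot A \<alpha> \<and> sbot A \<sigma>1 = sbot A \<beta> \<and>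
        svcomp A \<sigma>0 \<beta> = svcomp A \<alpha> \<sigma>1},
     mdom = sleft A, mcod = sright A, mcomp = shcomp A, mid = shid A,
     cdom = (\<lambda>(\<alpha>,\<beta>,\<sigma>0,\<sigma>1). \<alpha>), ccod = (\<lambda>(\<alpha>,\<beta>,\<sigma>0,\<sigma>1). \<beta>),
     ccompv = (\<lambda>(\<alpha>,\<beta>,\<sigma>0,\<sigma>1) (\<alpha>',\<beta>',\<tau>0,\<tau>1). (\<alpha>, \<beta>', svcomp A \<sigma>0 \<tau>0, svcomp A \<sigma>1 \<tau>1)),
     ccomph = (\<lambda>(\<alpha>,\<beta>,\<sigma>0,\<sigma>1) (\<alpha>',\<beta>',\<tau>0,\<tau>1).
                 (shcomp A \<alpha> \<alpha>', shcomp A \<beta> \<beta>', shcomp A \<sigma>0 \<tau>0, shcomp A \<sigma>1 \<tau>1)),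
     cid = (\<lambda>\<alpha>. (\<alpha>, \<alpha>, svid A (stop A \<alpha>), svid A (sbot A \<alpha>))) \<rparr>"

definition Hfun :: "('o1,'h1,'v1,'s1,'o2,'h2,'v2,'s2) dblfun \<Rightarrow> ('o1,'h1,'s1,'o2,'h2,'s2) twofun" where
  "Hfun F = \<lparr> G0 = fO F, G1 = fH F, G2 = fS F \<rparr>"

definition Vfun :: "('o1,'h1,'v1,'s1,'o2,'h2,'v2,'s2) dblfun \<Rightarrow>
    ('v1,'s1,'s1\<times>'s1\<times>'s1\<times>'s1,'v2,'s2,'s2\<times>'s2\<times>'s2\<times>'s2) twofun" where
  "Vfun F = \<lparr> G0 = fV F, G1 = fS F,
     G2 = (\<lambda>(\<alpha>,\<beta>,\<sigma>0,\<sigma>1). (fS F \<alpha>, fS F \<beta>, fS F \<sigma>0, fS F \<sigma>1)) \<rparr>"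

end

theory Submission
  imports Defs
begin


definition wf2 :: "('o,'m,'c) twocat \<Rightarrow> bool" where
  "wf2 C \<longleftrightarrow>
   (\<forall>f\<in>TMor C. mdom C f \<in> TObj C \<and> mcod C f \<in> TObj C) \<and>
   (\<forall>x\<in>TObj C. mid C x \<in> TMor C \<and> mdom C (mid C x) = x \<and> mcod C (mid C x) = x \<and>
       mcomp C (mid C x) (mid C x) = mid C x) \<and>
   (\<forall>f\<in>TMor C. \<forall>g\<in>TMor C. mcod C f = mdom C g \<longrightarrow>
       mcomp C f g \<in> TMor C \<and> mdom C (mcomp C f g) = mdom C f \<and> mcod C (mcomp C f g) = mcod C g) \<and>
   (\<forall>\<theta>\<in>TCell C. cdom C \<theta> \<in> TMor C \<and> ccod C \<theta> \<in> TMor C \<and>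
       mdom C (cdom C \<theta>) = mdom C (ccod C \<theta>) \<and> mcod C (cdom C \<theta>) = mcod C (ccod C \<theta>)) \<and>
   (\<forall>f\<in>TMor C. cid C f \<in> TCell C \<and> cdom C (cid C f) = f \<and> ccod C (cid C f) = f \<and>
       ccompv C (cid C f) (cid C f) = cid C f) \<and>
   (\<forall>\<theta>\<in>TCell C. \<forall>\<psi>\<in>TCell C. ccod C \<theta> = cdom C \<psi> \<longrightarrow>
       ccompv C \<theta> \<psi> \<in> TCell C \<and> cdom C (ccompv C \<theta> \<psi>) = cdom C \<theta> \<and> ccod C (ccompv C \<theta> \<psi>) = ccod C \<psi>)"

definition fun2 :: "('o1,'m1,'c1) twocat \<Rightarrow> ('o2,'m2,'c2) twocat \<Rightarrow> ('o1,'m1,'c1,'o2,'m2,'c2) twofun \<Rightarrow> bool" where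
  "fun2 C D G \<longleftrightarrow>
   (\<forall>x\<in>TObj C. G0 G x \<in> TObj D) \<and>
   (\<forall>f\<in>TMor C. G1 G f \<in> TMor D \<and> mdom D (G1 G f) = G0 G (mdom C f) \<and> mcod D (G1 G f) = G0 G (mcod C f)) \<and>
   (\<forall>\<theta>\<in>TCell C. G2 G \<theta> \<in> TCell D \<and> cdom D (G2 G \<theta>) = G1 G (cdom C \<theta>) \<and> ccod D (G2 G \<theta>) = G1 G (ccod C \<theta>)) \<and>
   (\<forall>x\<in>TObj C. G1 G (mid C x) = mid D (G0 G x)) \<and>
   (\<forall>f\<in>TMor C. \<forall>g\<in>TMor C. mcod C f = mdom C g \<longrightarrow> G1 G (mcomp C f g) = mcomp D (G1 G f) (G1 G g)) \<and>
   (\<forall>f\<in>TMor C. G2 G (cid C f) = cid D (G1 G f)) \<and>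
   (\<forall>\<theta>\<in>TCell C. \<forall>\<psi>\<in>TCell C. ccod C \<theta> = cdom C \<psi> \<longrightarrow> G2 G (ccompv C \<theta> \<psi>) = ccompv D (G2 G \<theta>) (G2 G \<psi>))"

definition SSo where "SSo C D G \<longleftrightarrow> (\<forall>y\<in>TObj D. \<exists>x\<in>TObj C. G0 G x = y)"
definition SFm where "SFm C D G \<longleftrightarrow> (\<forall>x\<in>TObj C. \<forall>x'\<in>TObj C. \<forall>g. is_mor D g (G0 G x) (G0 G x') \<longrightarrow>
      (\<exists>f. is_mor C f x x' \<and> G1 G f = g))"
definition FFc where "FFc C D G \<longleftrightarrow>
   (\<forall>f f' \<theta>. f \<in> TMor C \<longrightarrow> f' \<in> TMor C \<longrightarrow> mdom C f = mdom C f' \<longrightarrow> mcod C f = mcod C f' \<longrightarrow>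
      is_cell D \<theta> (G1 G f) (G1 G f') \<longrightarrow> (\<exists>!\<phi>. is_cell C \<phi> f f' \<and> G2 G \<phi> = \<theta>))"

lemma inv_cell_sym:
  assumes "invertible_cell D \<theta>" "is_cell D \<psi> (ccod D \<theta>) (cdom D \<theta>)"
    "ccompv D \<theta> \<psi> = cid D (cdom D \<theta>)" "ccompv D \<psi> \<theta> = cid D (ccod D \<theta>)"
  shows "invertible_cell D \<psi>"
  using assms unfolding invertible_cell_def is_cell_def by auto

lemma iso_refl: assumes "wf2 D" "f \<in> TMor D" shows "iso_mor D f f"
  using assms unfolding wf2_def iso_mor_def invertible_cell_def is_cell_def by metis

lemma equiv_id: assumes "wf2 D" "x \<in> TObj D" shows "equivalence D (mid D x)"
proof -
  have m: "mid D x \<in> TMor D" "mdom D (mid D x) = x" "mcod D (mid D x) = x"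
      "mcomp D (mid D x) (mid D x) = mid D x"
    using assms unfolding wf2_def by auto
  show ?thesis unfolding equivalence_def is_mor_def
    using m iso_refl[OF assms(1) m(1)] by metis
qed

lemma equiv_sym: assumes "equivalence D f"
  shows "\<exists>g. is_mor D g (mcod D f) (mdom D f) \<and> equivalence D g"
  using assms unfolding equivalence_def is_mor_def by metis

lemma FF_reflect_inv:
  assumes wC: "wf2 C" and wD: "wf2 D" and fG: "fun2 C D G" and FF: "FFc C D G"
    and ph: "\<phi> \<in> TCell C" and inv: "invertible_cell D (G2 G \<phi>)"
  shows "invertible_cell C \<phi>"
proof -
  define f where "f = cdom C \<phi>"
  define f' where "f' = ccod C \<phi>"
  have par: "f \<in> TMor C" "f' \<in> TMor C" "mdom C f = mdom C f'" "mcod C f = mcod C f'"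
    using wC ph unfolding wf2_def f_def f'_def by auto
  have Gp: "G2 G \<phi> \<in> TCell D" "cdom D (G2 G \<phi>) = G1 G f" "ccod D (G2 G \<phi>) = G1 G f'"
    using fG ph unfolding fun2_def f_def f'_def by auto
  obtain \<psi>D where pD: "is_cell D \<psi>D (G1 G f') (G1 G f)"
    "ccompv D (G2 G \<phi>) \<psi>D = cid D (G1 G f)" "ccompv D \<psi>D (G2 G \<phi>) = cid D (G1 G f')"
    using inv Gp unfolding invertible_cell_def by auto
  obtain \<psi> where ps: "is_cell C \<psi> f' f" "G2 G \<psi> = \<psi>D"
    using FF par pD(1) unfolding FFc_def by (metis (no_types, lifting))
  have G1t: "G1 G f \<in> TMor D" "G1 G f' \<in> TMor D" using fG par unfolding fun2_def by auto
  have c1: "ccompv C \<phi> \<psi> \<in> TCell C" "cdom C (ccompv C \<phi> \<psi>) = f" "ccod C (ccompv C \<phi> \<psi>) = f"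
    using wC ph ps(1) unfolding wf2_def is_cell_def f_def f'_def by auto
  have c2: "ccompv C \<psi> \<phi> \<in> TCell C" "cdom C (ccompv C \<psi> \<phi>) = f'" "ccod C (ccompv C \<psi> \<phi>) = f'"
    using wC ph ps(1) unfolding wf2_def is_cell_def f_def f'_def by auto
  have i1: "cid C f \<in> TCell C" "cdom C (cid C f) = f" "ccod C (cid C f) = f"
     "cid C f' \<in> TCell C" "cdom C (cid C f') = f'" "ccod C (cid C f') = f'"
    using wC par unfolding wf2_def by auto
  have g1: "G2 G (ccompv C \<phi> \<psi>) = cid D (G1 G f)"
    using fG ph ps pD unfolding fun2_def is_cell_def f'_def by auto
  have g2: "G2 G (ccompv C \<psi> \<phi>) = cid D (G1 G f')"
    using fG ph ps pD unfolding fun2_def is_cell_def f_def by auto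
  have gi: "G2 G (cid C f) = cid D (G1 G f)" "G2 G (cid C f') = cid D (G1 G f')"
    using fG par unfolding fun2_def by auto
  have cD: "is_cell D (cid D (G1 G f)) (G1 G f) (G1 G f)" "is_cell D (cid D (G1 G f')) (G1 G f') (G1 G f')"
    using wD G1t unfolding wf2_def is_cell_def by auto
  have u1: "\<exists>!\<chi>. is_cell C \<chi> f f \<and> G2 G \<chi> = cid D (G1 G f)"
    using FF par cD unfolding FFc_def by blast
  have u2: "\<exists>!\<chi>. is_cell C \<chi> f' f' \<and> G2 G \<chi> = cid D (G1 G f')"
    using FF par cD unfolding FFc_def by blast
  have e1: "ccompv C \<phi> \<psi> = cid C f"
    using u1 c1 i1 g1 gi unfolding is_cell_def by blast
  have e2: "ccompv C \<psi> \<phi> = cid C f'"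
    using u2 c2 i1 g2 gi unfolding is_cell_def by blast
  show ?thesis unfolding invertible_cell_def
    using ph ps(1) e1 e2 unfolding f_def f'_def by blast
qed

lemma FF_reflect_iso:
  assumes wC: "wf2 C" and wD: "wf2 D" and fG: "fun2 C D G" and FF: "FFc C D G"
    and f: "f \<in> TMor C" "f' \<in> TMor C" "mdom C f = mdom C f'" "mcod C f = mcod C f'"
    and iso: "iso_mor D (G1 G f) (G1 G f')"
  shows "iso_mor C f f'"
proof -
  obtain \<theta> where th: "is_cell D \<theta> (G1 G f) (G1 G f')" "invertible_cell D \<theta>"
    using iso unfolding iso_mor_def by auto
  obtain \<phi> where ph: "is_cell C \<phi> f f'" "G2 G \<phi> = \<theta>"
    using FF f th(1) unfolding FFc_def by (metis (no_types, lifting))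
  have "invertible_cell C \<phi>"
    using FF_reflect_inv[OF wC wD fG FF] ph th unfolding is_cell_def by auto
  then show ?thesis using ph unfolding iso_mor_def by auto
qed

lemma reflect_equiv:
  assumes wC: "wf2 C" and wD: "wf2 D" and fG: "fun2 C D G" and FF: "FFc C D G" and SF: "SFm C D G"
    and f: "f \<in> TMor C" and eq: "equivalence D (G1 G f)"
  shows "equivalence C f"
proof -
  define x where "x = mdom C f"
  define y where "y = mcod C f"
  have xy: "x \<in> TObj C" "y \<in> TObj C" using wC f unfolding wf2_def x_def y_def by auto
  have Gf: "G1 G f \<in> TMor D" "mdom D (G1 G f) = G0 G x" "mcod D (G1 G f) = G0 G y"
    using fG f unfolding fun2_def x_def y_def by auto
  obtain gD where gD: "is_mor D gD (G0 G y) (G0 G x)"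
     "iso_mor D (mcomp D (G1 G f) gD) (mid D (G0 G x))"
     "iso_mor D (mcomp D gD (G1 G f)) (mid D (G0 G y))"
    using eq Gf unfolding equivalence_def by auto
  obtain g where g: "is_mor C g y x" "G1 G g = gD"
    using SF xy gD(1) unfolding SFm_def by blast
  have gt: "g \<in> TMor C" "mdom C g = y" "mcod C g = x" using g unfolding is_mor_def by auto
  have m1: "mcomp C f g \<in> TMor C" "mdom C (mcomp C f g) = x" "mcod C (mcomp C f g) = x"
    "mcomp C g f \<in> TMor C" "mdom C (mcomp C g f) = y" "mcod C (mcomp C g f) = y"
    using wC f gt unfolding wf2_def x_def y_def by auto
  have m2: "mid C x \<in> TMor C" "mdom C (mid C x) = x" "mcod C (mid C x) = x"
     "mid C y \<in> TMor C" "mdom C (mid C y) = y" "mcod C (mid C y) = y"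
    using wC xy unfolding wf2_def by auto
  have G1c: "G1 G (mcomp C f g) = mcomp D (G1 G f) gD" "G1 G (mcomp C g f) = mcomp D gD (G1 G f)"
     "G1 G (mid C x) = mid D (G0 G x)" "G1 G (mid C y) = mid D (G0 G y)"
    using fG f gt g(2) xy unfolding fun2_def x_def y_def by auto
  have "iso_mor C (mcomp C f g) (mid C x)"
    using FF_reflect_iso[OF wC wD fG FF m1(1) m2(1)] m1 m2 G1c gD by auto
  moreover have "iso_mor C (mcomp C g f) (mid C y)"
    using FF_reflect_iso[OF wC wD fG FF m1(4) m2(4)] m1 m2 G1c gD by auto
  ultimately show ?thesis unfolding equivalence_def is_mor_def using f gt x_def y_def by auto
qed

lemma abstract_main:
  assumes wC: "wf2 C" and wD: "wf2 D" and fG: "fun2 C D G"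
  shows "lack_trivial_fibration C D G \<longleftrightarrow> SSo C D G \<and> SFm C D G \<and> FFc C D G"
proof
  assume L: "lack_trivial_fibration C D G"
  have FF: "FFc C D G" using L unfolding lack_trivial_fibration_def biequivalence_def FFc_def by blast
  have SS: "SSo C D G" unfolding SSo_def
  proof
    fix y assume y: "y \<in> TObj D"
    obtain x e where xe: "x \<in> TObj C" "is_mor D e (G0 G x) y" "equivalence D e"
      using L y unfolding lack_trivial_fibration_def biequivalence_def by blast
    obtain g where g: "is_mor D g y (G0 G x)" "equivalence D g"
      using equiv_sym[OF xe(3)] xe(2) unfolding is_mor_def by auto
    obtain a where a: "a \<in> TMor C" "mcod C a = x" "G1 G a = g"
      using L xe(1) g unfolding lack_trivial_fibration_def lack_fibration_def is_mor_def by blast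
    have "mdom C a \<in> TObj C" "G0 G (mdom C a) = y"
      using wC fG a g unfolding wf2_def fun2_def is_mor_def by auto
    then show "\<exists>x\<in>TObj C. G0 G x = y" by blast
  qed
  have SF: "SFm C D G" unfolding SFm_def
  proof (intro ballI allI impI)
    fix x x' g assume x: "x \<in> TObj C" "x' \<in> TObj C" and g: "is_mor D g (G0 G x) (G0 G x')"
    obtain f where f: "is_mor C f x x'" "iso_mor D (G1 G f) g"
      using L x g unfolding lack_trivial_fibration_def biequivalence_def by blast
    obtain \<theta> where th0: "is_cell D \<theta> (G1 G f) g" "invertible_cell D \<theta>"
      using f(2) unfolding iso_mor_def by auto
    then obtain \<psi> where th1: "is_cell D \<psi> g (G1 G f)" "ccompv D \<theta> \<psi> = cid D (G1 G f)" "ccompv D \<psi> \<theta> = cid D g"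
      unfolding invertible_cell_def is_cell_def by auto
    note th = th0 th1
    have pinv: "invertible_cell D \<psi>"
      using inv_cell_sym[OF th(2)] th unfolding is_cell_def by auto
    obtain \<alpha> where al: "\<alpha> \<in> TCell C" "ccod C \<alpha> = f" "G2 G \<alpha> = \<psi>"
      using L f(1) th(3) pinv unfolding lack_trivial_fibration_def lack_fibration_def is_mor_def is_cell_def
      by blast
    have "cdom C \<alpha> \<in> TMor C" "mdom C (cdom C \<alpha>) = x" "mcod C (cdom C \<alpha>) = x'"
      "G1 G (cdom C \<alpha>) = g"
      using wC fG al f(1) th(3) unfolding wf2_def fun2_def is_mor_def is_cell_def by auto
    then show "\<exists>f. is_mor C f x x' \<and> G1 G f = g" unfolding is_mor_def by blast
  qed
  show "SSo C D G \<and> SFm C D G \<and> FFc C D G" using SS SF FF by blast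
next
  assume R: "SSo C D G \<and> SFm C D G \<and> FFc C D G"
  then have SS: "SSo C D G" and SF: "SFm C D G" and FF: "FFc C D G" by auto
  have B1: "\<forall>y\<in>TObj D. \<exists>x\<in>TObj C. \<exists>e. is_mor D e (G0 G x) y \<and> equivalence D e"
  proof
    fix y assume y: "y \<in> TObj D"
    then obtain x where x: "x \<in> TObj C" "G0 G x = y" using SS unfolding SSo_def by blast
    have "is_mor D (mid D y) (G0 G x) y" "equivalence D (mid D y)"
      using wD y x equiv_id[OF wD y] unfolding wf2_def is_mor_def by auto
    then show "\<exists>x\<in>TObj C. \<exists>e. is_mor D e (G0 G x) y \<and> equivalence D e" using x by blast
  qed
  have B2: "\<forall>x\<in>TObj C. \<forall>x'\<in>TObj C. \<forall>g. is_mor D g (G0 G x) (G0 G x') \<longrightarrow>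
      (\<exists>f. is_mor C f x x' \<and> iso_mor D (G1 G f) g)"
  proof (intro ballI allI impI)
    fix x x' g assume x: "x \<in> TObj C" "x' \<in> TObj C" and g: "is_mor D g (G0 G x) (G0 G x')"
    then obtain f where "is_mor C f x x'" "G1 G f = g" using SF unfolding SFm_def by blast
    then show "\<exists>f. is_mor C f x x' \<and> iso_mor D (G1 G f) g"
      using iso_refl[OF wD] g unfolding is_mor_def by blast
  qed
  have L1: "\<forall>c\<in>TObj C. \<forall>b. b \<in> TMor D \<longrightarrow> mcod D b = G0 G c \<longrightarrow> equivalence D b \<longrightarrow>
      (\<exists>a. a \<in> TMor C \<and> mcod C a = c \<and> equivalence C a \<and> G1 G a = b)"
  proof (intro ballI allI impI)
    fix c b assume c: "c \<in> TObj C" and b: "b \<in> TMor D" "mcod D b = G0 G c" "equivalence D b"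
    have "mdom D b \<in> TObj D" using wD b unfolding wf2_def by auto
    then obtain x where x: "x \<in> TObj C" "G0 G x = mdom D b" using SS unfolding SSo_def by blast
    then obtain a where a: "is_mor C a x c" "G1 G a = b" using SF c b unfolding SFm_def is_mor_def by metis
    have "equivalence C a"
      using reflect_equiv[OF wC wD fG FF SF] a b unfolding is_mor_def by auto
    then show "\<exists>a. a \<in> TMor C \<and> mcod C a = c \<and> equivalence C a \<and> G1 G a = b"
      using a unfolding is_mor_def by blast
  qed
  have L2: "\<forall>c\<in>TMor C. \<forall>\<beta>. \<beta> \<in> TCell D \<longrightarrow> ccod D \<beta> = G1 G c \<longrightarrow> invertible_cell D \<beta> \<longrightarrow>
      (\<exists>\<alpha>. \<alpha> \<in> TCell C \<and> ccod C \<alpha> = c \<and> invertible_cell C \<alpha> \<and> G2 G \<alpha> = \<beta>)"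
  proof (intro ballI allI impI)
    fix c \<beta> assume c: "c \<in> TMor C" and b: "\<beta> \<in> TCell D" "ccod D \<beta> = G1 G c" "invertible_cell D \<beta>"
    have cm: "mdom C c \<in> TObj C" "mcod C c \<in> TObj C" using wC c unfolding wf2_def by auto
    have "cdom D \<beta> \<in> TMor D" "mdom D (cdom D \<beta>) = G0 G (mdom C c)" "mcod D (cdom D \<beta>) = G0 G (mcod C c)"
      using wD fG b c unfolding wf2_def fun2_def by auto
    then obtain a where a: "is_mor C a (mdom C c) (mcod C c)" "G1 G a = cdom D \<beta>"
      using SF cm unfolding SFm_def is_mor_def by metis
    have "is_cell D \<beta> (G1 G a) (G1 G c)" using a b unfolding is_cell_def by auto
    then obtain \<alpha> where al: "is_cell C \<alpha> a c" "G2 G \<alpha> = \<beta>"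
      using FF a c unfolding FFc_def is_mor_def by (metis (no_types, lifting))
    have "invertible_cell C \<alpha>" using FF_reflect_inv[OF wC wD fG FF] al b unfolding is_cell_def by auto
    then show "\<exists>\<alpha>. \<alpha> \<in> TCell C \<and> ccod C \<alpha> = c \<and> invertible_cell C \<alpha> \<and> G2 G \<alpha> = \<beta>"
      using al unfolding is_cell_def by blast
  qed
  show "lack_trivial_fibration C D G"
    unfolding lack_trivial_fibration_def biequivalence_def lack_fibration_def
    using B1 B2 FF L1 L2 unfolding FFc_def by blast
qed



locale dbl = fixes A :: "('o,'h,'v,'s) dblcat" assumes D: "is_dblcat A"
begin
lemmas r0 = D[unfolded is_dblcat_def]
lemmas c1 = r0[THEN conjunct1]
lemmas r1 = r0[THEN conjunct2]
lemmas c2 = r1[THEN conjunct1]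
lemmas r2 = r1[THEN conjunct2]
lemmas c3 = r2[THEN conjunct1]
lemmas r3 = r2[THEN conjunct2]
lemmas c4 = r3[THEN conjunct1]
lemmas r4 = r3[THEN conjunct2]
lemmas c5 = r4[THEN conjunct1]
lemmas r5 = r4[THEN conjunct2]
lemmas c6 = r5[THEN conjunct1]
lemmas r6 = r5[THEN conjunct2]
lemmas c7 = r6[THEN conjunct1]
lemmas r7 = r6[THEN conjunct2]
lemmas c8 = r7[THEN conjunct1]
lemmas r8 = r7[THEN conjunct2]
lemmas c9 = r8[THEN conjunct1]
lemmas r9 = r8[THEN conjunct2]
lemmas c10 = r9[THEN conjunct1]
lemmas r10 = r9[THEN conjunct2]
lemmas c11 = r10[THEN conjunct1]
lemmas r11 = r10[THEN conjunct2]
lemmas c12 = r11[THEN conjunct1]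
lemmas r12 = r11[THEN conjunct2]
lemmas c13 = r12[THEN conjunct1]
lemmas r13 = r12[THEN conjunct2]
lemmas c14 = r13[THEN conjunct1]
lemmas r14 = r13[THEN conjunct2]
lemmas c15 = r14[THEN conjunct1]
lemmas r15 = r14[THEN conjunct2]
lemmas c16 = r15[THEN conjunct1]
lemmas r16 = r15[THEN conjunct2]
lemmas c17 = r16[THEN conjunct1]
lemmas r17 = r16[THEN conjunct2]
lemmas c18 = r17[THEN conjunct1]
lemmas r18 = r17[THEN conjunct2]
lemmas c19 = r18[THEN conjunct1]
lemmas r19 = r18[THEN conjunct2]
lemmas c20 = r19[THEN conjunct1]
lemmas r20 = r19[THEN conjunct2]
lemmas c21 = r20[THEN conjunct1]
lemmas r21 = r20[THEN conjunct2]
lemmas c22 = r21[THEN conjunct1]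
lemmas r22 = r21[THEN conjunct2]
lemmas c23 = r22
lemma hor_obj: "a \<in> Hor A \<Longrightarrow> hdom A a \<in> Obj A \<and> hcod A a \<in> Obj A"
  using c1 by blast
lemma hid: "x \<in> Obj A \<Longrightarrow> hid A x \<in> Hor A \<and> hdom A (hid A x) = x \<and> hcod A (hid A x) = x"
  using c2 by blast
lemma hcomp: "a \<in> Hor A \<Longrightarrow> b \<in> Hor A \<Longrightarrow> hcod A a = hdom A b \<Longrightarrow>
      hcomp A a b \<in> Hor A \<and> hdom A (hcomp A a b) = hdom A a \<and> hcod A (hcomp A a b) = hcod A b"
  using c3 by blast
lemma hunit: "a \<in> Hor A \<Longrightarrow> hcomp A (hid A (hdom A a)) a = a \<and> hcomp A a (hid A (hcod A a)) = a"
  using c4 by blast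
lemma ver_obj: "u \<in> Ver A \<Longrightarrow> vdom A u \<in> Obj A \<and> vcod A u \<in> Obj A"
  using c6 by blast
lemma vid: "x \<in> Obj A \<Longrightarrow> vid A x \<in> Ver A \<and> vdom A (vid A x) = x \<and> vcod A (vid A x) = x"
  using c7 by blast
lemma vcomp: "u \<in> Ver A \<Longrightarrow> v \<in> Ver A \<Longrightarrow> vcod A u = vdom A v \<Longrightarrow>
      vcomp A u v \<in> Ver A \<and> vdom A (vcomp A u v) = vdom A u \<and> vcod A (vcomp A u v) = vcod A v"
  using c8 by blast
lemma vunit: "u \<in> Ver A \<Longrightarrow> vcomp A (vid A (vdom A u)) u = u \<and> vcomp A u (vid A (vcod A u)) = u"
  using c9 by blast
lemma sq: "\<alpha> \<in> Sq A \<Longrightarrow> stop A \<alpha> \<in> Hor A \<and> sbot A \<alpha> \<in> Hor A \<and> sleft A \<alpha> \<in> Ver A \<and> sright A \<alpha> \<in> Ver A \<and>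
      hdom A (stop A \<alpha>) = vdom A (sleft A \<alpha>) \<and> hcod A (stop A \<alpha>) = vdom A (sright A \<alpha>) \<and>
      hdom A (sbot A \<alpha>) = vcod A (sleft A \<alpha>) \<and> hcod A (sbot A \<alpha>) = vcod A (sright A \<alpha>)"
  using c11 by blast
lemma shcomp: "\<alpha> \<in> Sq A \<Longrightarrow> \<beta> \<in> Sq A \<Longrightarrow> sright A \<alpha> = sleft A \<beta> \<Longrightarrow>
      shcomp A \<alpha> \<beta> \<in> Sq A \<and> sleft A (shcomp A \<alpha> \<beta>) = sleft A \<alpha> \<and> sright A (shcomp A \<alpha> \<beta>) = sright A \<beta> \<and>
      stop A (shcomp A \<alpha> \<beta>) = hcomp A (stop A \<alpha>) (stop A \<beta>) \<and>
      sbot A (shcomp A \<alpha> \<beta>) = hcomp A (sbot A \<alpha>) (sbot A \<beta>)"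
  using c12 by blast
lemma shid: "u \<in> Ver A \<Longrightarrow> shid A u \<in> Sq A \<and> sleft A (shid A u) = u \<and> sright A (shid A u) = u \<and>
      stop A (shid A u) = hid A (vdom A u) \<and> sbot A (shid A u) = hid A (vcod A u)"
  using c13 by blast
lemma shunit: "\<alpha> \<in> Sq A \<Longrightarrow> shcomp A (shid A (sleft A \<alpha>)) \<alpha> = \<alpha> \<and> shcomp A \<alpha> (shid A (sright A \<alpha>)) = \<alpha>"
  using c14 by blast
lemma svcomp: "\<alpha> \<in> Sq A \<Longrightarrow> \<beta> \<in> Sq A \<Longrightarrow> sbot A \<alpha> = stop A \<beta> \<Longrightarrow>
      svcomp A \<alpha> \<beta> \<in> Sq A \<and> stop A (svcomp A \<alpha> \<beta>) = stop A \<alpha> \<and> sbot A (svcomp A \<alpha> \<beta>) = sbot A \<beta> \<and>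
      sleft A (svcomp A \<alpha> \<beta>) = vcomp A (sleft A \<alpha>) (sleft A \<beta>) \<and>
      sright A (svcomp A \<alpha> \<beta>) = vcomp A (sright A \<alpha>) (sright A \<beta>)"
  using c16 by blast
lemma svid: "a \<in> Hor A \<Longrightarrow> svid A a \<in> Sq A \<and> stop A (svid A a) = a \<and> sbot A (svid A a) = a \<and>
      sleft A (svid A a) = vid A (hdom A a) \<and> sright A (svid A a) = vid A (hcod A a)"
  using c17 by blast
lemma svunit: "\<alpha> \<in> Sq A \<Longrightarrow> svcomp A (svid A (stop A \<alpha>)) \<alpha> = \<alpha> \<and> svcomp A \<alpha> (svid A (sbot A \<alpha>)) = \<alpha>"
  using c18 by blast
lemma svassoc: "\<alpha> \<in> Sq A \<Longrightarrow> \<beta> \<in> Sq A \<Longrightarrow> \<gamma> \<in> Sq A \<Longrightarrow> sbot A \<alpha> = stop A \<beta> \<Longrightarrow> sbot A \<beta> = stop A \<gamma> \<Longrightarrow>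
      svcomp A (svcomp A \<alpha> \<beta>) \<gamma> = svcomp A \<alpha> (svcomp A \<beta> \<gamma>)"
  using c19 by blast

lemmas hor_obj_1 = hor_obj[THEN conjunct1]
lemmas hor_obj_2 = hor_obj[THEN conjunct2]
lemmas hid_1 = hid[THEN conjunct1]
lemmas hid_2 = hid[THEN conjunct2, THEN conjunct1]
lemmas hid_3 = hid[THEN conjunct2, THEN conjunct2]
lemmas hcomp_1 = hcomp[THEN conjunct1]
lemmas hcomp_2 = hcomp[THEN conjunct2, THEN conjunct1]
lemmas hcomp_3 = hcomp[THEN conjunct2, THEN conjunct2]
lemmas hunit_1 = hunit[THEN conjunct1]
lemmas hunit_2 = hunit[THEN conjunct2]
lemmas ver_obj_1 = ver_obj[THEN conjunct1]
lemmas ver_obj_2 = ver_obj[THEN conjunct2]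
lemmas vid_1 = vid[THEN conjunct1]
lemmas vid_2 = vid[THEN conjunct2, THEN conjunct1]
lemmas vid_3 = vid[THEN conjunct2, THEN conjunct2]
lemmas vcomp_1 = vcomp[THEN conjunct1]
lemmas vcomp_2 = vcomp[THEN conjunct2, THEN conjunct1]
lemmas vcomp_3 = vcomp[THEN conjunct2, THEN conjunct2]
lemmas vunit_1 = vunit[THEN conjunct1]
lemmas vunit_2 = vunit[THEN conjunct2]
lemmas sq_1 = sq[THEN conjunct1]
lemmas sq_2 = sq[THEN conjunct2, THEN conjunct1]
lemmas sq_3 = sq[THEN conjunct2, THEN conjunct2, THEN conjunct1]
lemmas sq_4 = sq[THEN conjunct2, THEN conjunct2, THEN conjunct2, THEN conjunct1]
lemmas sq_5 = sq[THEN conjunct2, THEN conjunct2, THEN conjunct2, THEN conjunct2, THEN conjunct1]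
lemmas sq_6 = sq[THEN conjunct2, THEN conjunct2, THEN conjunct2, THEN conjunct2, THEN conjunct2, THEN conjunct1]
lemmas sq_7 = sq[THEN conjunct2, THEN conjunct2, THEN conjunct2, THEN conjunct2, THEN conjunct2, THEN conjunct2, THEN conjunct1]
lemmas sq_8 = sq[THEN conjunct2, THEN conjunct2, THEN conjunct2, THEN conjunct2, THEN conjunct2, THEN conjunct2, THEN conjunct2]
lemmas shcomp_1 = shcomp[THEN conjunct1]
lemmas shcomp_2 = shcomp[THEN conjunct2, THEN conjunct1]
lemmas shcomp_3 = shcomp[THEN conjunct2, THEN conjunct2, THEN conjunct1]
lemmas shcomp_4 = shcomp[THEN conjunct2, THEN conjunct2, THEN conjunct2, THEN conjunct1]
lemmas shcomp_5 = shcomp[THEN conjunct2, THEN conjunct2, THEN conjunct2, THEN conjunct2]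
lemmas shid_1 = shid[THEN conjunct1]
lemmas shid_2 = shid[THEN conjunct2, THEN conjunct1]
lemmas shid_3 = shid[THEN conjunct2, THEN conjunct2, THEN conjunct1]
lemmas shid_4 = shid[THEN conjunct2, THEN conjunct2, THEN conjunct2, THEN conjunct1]
lemmas shid_5 = shid[THEN conjunct2, THEN conjunct2, THEN conjunct2, THEN conjunct2]
lemmas shunit_1 = shunit[THEN conjunct1]
lemmas shunit_2 = shunit[THEN conjunct2]
lemmas svcomp_1 = svcomp[THEN conjunct1]
lemmas svcomp_2 = svcomp[THEN conjunct2, THEN conjunct1]
lemmas svcomp_3 = svcomp[THEN conjunct2, THEN conjunct2, THEN conjunct1]
lemmas svcomp_4 = svcomp[THEN conjunct2, THEN conjunct2, THEN conjunct2, THEN conjunct1]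
lemmas svcomp_5 = svcomp[THEN conjunct2, THEN conjunct2, THEN conjunct2, THEN conjunct2]
lemmas svid_1 = svid[THEN conjunct1]
lemmas svid_2 = svid[THEN conjunct2, THEN conjunct1]
lemmas svid_3 = svid[THEN conjunct2, THEN conjunct2, THEN conjunct1]
lemmas svid_4 = svid[THEN conjunct2, THEN conjunct2, THEN conjunct2, THEN conjunct1]
lemmas svid_5 = svid[THEN conjunct2, THEN conjunct2, THEN conjunct2, THEN conjunct2]
lemmas svunit_1 = svunit[THEN conjunct1]
lemmas svunit_2 = svunit[THEN conjunct2]
lemmas sf = hor_obj_1 hor_obj_2 hid_1 hid_2 hid_3 hcomp_1 hcomp_2 hcomp_3 hunit_1 hunit_2
  ver_obj_1 ver_obj_2 vid_1 vid_2 vid_3 vcomp_1 vcomp_2 vcomp_3 vunit_1 vunit_2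
  sq_1 sq_2 sq_3 sq_4 shcomp_1 shcomp_2 shcomp_3 shcomp_4 shcomp_5 shid_1 shid_2 shid_3 shid_4 shid_5
  shunit_1 shunit_2 svcomp_1 svcomp_2 svcomp_3 svcomp_4 svcomp_5 svid_1 svid_2 svid_3 svid_4 svid_5
  svunit_1 svunit_2
lemmas ds = hor_obj hid hcomp hunit ver_obj vid vcomp vunit sq shcomp shid shunit svcomp svid svunit

lemma vidvid: "x \<in> Obj A \<Longrightarrow> vcomp A (vid A x) (vid A x) = vid A x"
  using vunit[of "vid A x"] vid[of x] by auto
lemma svidsvid: "a \<in> Hor A \<Longrightarrow> svcomp A (svid A a) (svid A a) = svid A a"
  using svunit[of "svid A a"] svid[of a] by auto

lemma hidhid: "x \<in> Obj A \<Longrightarrow> hcomp A (hid A x) (hid A x) = hid A x"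
  using hunit[of "hid A x"] hid[of x] by auto
lemma glob_hdom: "\<sigma> \<in> Sq A \<Longrightarrow> sleft A \<sigma> = vid A (hdom A (stop A \<sigma>)) \<Longrightarrow> hdom A (sbot A \<sigma>) = hdom A (stop A \<sigma>)"
  using sq[of \<sigma>] vid[of "hdom A (stop A \<sigma>)"] hor_obj[of "stop A \<sigma>"] by auto
lemma glob_hcod: "\<sigma> \<in> Sq A \<Longrightarrow> sright A \<sigma> = vid A (hcod A (stop A \<sigma>)) \<Longrightarrow> hcod A (sbot A \<sigma>) = hcod A (stop A \<sigma>)"
  using sq[of \<sigma>] vid[of "hcod A (stop A \<sigma>)"] hor_obj[of "stop A \<sigma>"] by auto

lemma wfH: "wf2 (Hcat A)"
  unfolding wf2_def Hcat_def
  apply (simp only: twocat.simps mem_Collect_eq)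
  apply (intro conjI ballI impI)
  apply (auto simp: sf vidvid svidsvid hidhid glob_hdom glob_hcod)
  apply (metis glob_hdom vidvid hor_obj_1 sq_1)
  apply (metis glob_hcod vidvid hor_obj_2 sq_1)
  done

lemma H_simps: "TObj (Hcat A) = Obj A" "TMor (Hcat A) = Hor A"
  "TCell (Hcat A) = {\<sigma> \<in> Sq A. sleft A \<sigma> = vid A (hdom A (stop A \<sigma>)) \<and> sright A \<sigma> = vid A (hcod A (stop A \<sigma>))}"
  "mdom (Hcat A) = hdom A" "mcod (Hcat A) = hcod A" "cdom (Hcat A) = stop A" "ccod (Hcat A) = sbot A"
  unfolding Hcat_def by simp_all

definition vcell where "vcell \<alpha> \<beta> \<sigma>0 \<sigma>1 \<longleftrightarrow> \<alpha> \<in> Sq A \<and> \<beta> \<in> Sq A \<and> sleft A \<alpha> = sleft A \<beta> \<and> sright A \<alpha> = sright A \<beta> \<and>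
        \<sigma>0 \<in> Sq A \<and> sleft A \<sigma>0 = vid A (hdom A (stop A \<alpha>)) \<and> sright A \<sigma>0 = vid A (hcod A (stop A \<alpha>)) \<and>
          stop A \<sigma>0 = stop A \<alpha> \<and> sbot A \<sigma>0 = stop A \<beta> \<and>
        \<sigma>1 \<in> Sq A \<and> sleft A \<sigma>1 = vid A (hdom A (sbot A \<alpha>)) \<and> sright A \<sigma>1 = vid A (hcod A (sbot A \<alpha>)) \<and>
          stop A \<sigma>1 = sbot A \<alpha> \<and> sbot A \<sigma>1 = sbot A \<beta> \<and>
        svcomp A \<sigma>0 \<beta> = svcomp A \<alpha> \<sigma>1"

lemma V_simps: "TObj (Vcat A) = Ver A" "TMor (Vcat A) = Sq A"
  "TCell (Vcat A) = {(\<alpha>,\<beta>,\<sigma>0,\<sigma>1). vcell \<alpha> \<beta> \<sigma>0 \<sigma>1}"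
  "mdom (Vcat A) = sleft A" "mcod (Vcat A) = sright A" "mcomp (Vcat A) = shcomp A" "mid (Vcat A) = shid A"
  "cdom (Vcat A) (\<alpha>,\<beta>,\<sigma>0,\<sigma>1) = \<alpha>" "ccod (Vcat A) (\<alpha>,\<beta>,\<sigma>0,\<sigma>1) = \<beta>"
  "ccompv (Vcat A) (\<alpha>,\<beta>,\<sigma>0,\<sigma>1) (\<alpha>',\<beta>',\<tau>0,\<tau>1) = (\<alpha>, \<beta>', svcomp A \<sigma>0 \<tau>0, svcomp A \<sigma>1 \<tau>1)"
  "cid (Vcat A) \<alpha> = (\<alpha>, \<alpha>, svid A (stop A \<alpha>), svid A (sbot A \<alpha>))"
  unfolding Vcat_def vcell_def by simp_all

lemma vcell_cid: "\<alpha> \<in> Sq A \<Longrightarrow> vcell \<alpha> \<alpha> (svid A (stop A \<alpha>)) (svid A (sbot A \<alpha>))"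
  unfolding vcell_def using sq[of \<alpha>] svid[of "stop A \<alpha>"] svid[of "sbot A \<alpha>"] svunit[of \<alpha>] by auto

lemma vcell_comp:
  assumes c1: "vcell \<alpha> \<beta> \<sigma>0 \<sigma>1" and c2: "vcell \<beta> \<gamma> \<tau>0 \<tau>1"
  shows "vcell \<alpha> \<gamma> (svcomp A \<sigma>0 \<tau>0) (svcomp A \<sigma>1 \<tau>1)"
proof -
  note a = c1[unfolded vcell_def] and b = c2[unfolded vcell_def]
  have sqa: "stop A \<alpha> \<in> Hor A" "sbot A \<alpha> \<in> Hor A" using a sq[of \<alpha>] by auto
  have e1: "hdom A (stop A \<beta>) = hdom A (stop A \<alpha>)" "hcod A (stop A \<beta>) = hcod A (stop A \<alpha>)"
     "hdom A (sbot A \<beta>) = hdom A (sbot A \<alpha>)" "hcod A (sbot A \<beta>) = hcod A (sbot A \<alpha>)"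
    using a sq[of \<alpha>] sq[of \<beta>] by auto
  have o: "hdom A (stop A \<alpha>) \<in> Obj A" "hcod A (stop A \<alpha>) \<in> Obj A"
          "hdom A (sbot A \<alpha>) \<in> Obj A" "hcod A (sbot A \<alpha>) \<in> Obj A"
    using sqa hor_obj by auto
  have s0: "svcomp A \<sigma>0 \<tau>0 \<in> Sq A" "stop A (svcomp A \<sigma>0 \<tau>0) = stop A \<alpha>"
     "sbot A (svcomp A \<sigma>0 \<tau>0) = stop A \<gamma>"
     "sleft A (svcomp A \<sigma>0 \<tau>0) = vid A (hdom A (stop A \<alpha>))"
     "sright A (svcomp A \<sigma>0 \<tau>0) = vid A (hcod A (stop A \<alpha>))"
    using svcomp[of \<sigma>0 \<tau>0] a b e1 vidvid o by auto
  have s1: "svcomp A \<sigma>1 \<tau>1 \<in> Sq A" "stop A (svcomp A \<sigma>1 \<tau>1) = sbot A \<alpha>"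
     "sbot A (svcomp A \<sigma>1 \<tau>1) = sbot A \<gamma>"
     "sleft A (svcomp A \<sigma>1 \<tau>1) = vid A (hdom A (sbot A \<alpha>))"
     "sright A (svcomp A \<sigma>1 \<tau>1) = vid A (hcod A (sbot A \<alpha>))"
    using svcomp[of \<sigma>1 \<tau>1] a b e1 vidvid o by auto
  have "svcomp A (svcomp A \<sigma>0 \<tau>0) \<gamma> = svcomp A \<sigma>0 (svcomp A \<tau>0 \<gamma>)"
    using svassoc[of \<sigma>0 \<tau>0 \<gamma>] a b by auto
  also have "\<dots> = svcomp A \<sigma>0 (svcomp A \<beta> \<tau>1)" using b by simp
  also have "\<dots> = svcomp A (svcomp A \<sigma>0 \<beta>) \<tau>1"
    using svassoc[of \<sigma>0 \<beta> \<tau>1] a b by auto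
  also have "\<dots> = svcomp A (svcomp A \<alpha> \<sigma>1) \<tau>1" using a by simp
  also have "\<dots> = svcomp A \<alpha> (svcomp A \<sigma>1 \<tau>1)"
    using svassoc[of \<alpha> \<sigma>1 \<tau>1] a b by auto
  finally have eq: "svcomp A (svcomp A \<sigma>0 \<tau>0) \<gamma> = svcomp A \<alpha> (svcomp A \<sigma>1 \<tau>1)" .
  show ?thesis unfolding vcell_def using a b s0 s1 eq by auto
qed

lemma shidshid: "u \<in> Ver A \<Longrightarrow> shcomp A (shid A u) (shid A u) = shid A u"
  using shunit[of "shid A u"] shid[of u] by auto

lemma wfV: "wf2 (Vcat A)"
  unfolding wf2_def V_simps
  apply (intro conjI)
  subgoal using sq by auto
  subgoal using shid shidshid by auto
  subgoal using shcomp by auto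
  subgoal by (auto simp: vcell_def V_simps)
  subgoal by (auto simp: vcell_cid svidsvid sq_1 sq_2 V_simps)
  subgoal by (auto simp: vcell_comp V_simps)
  done
end


locale dfun = A: dbl A + B: dbl B
  for A :: "('o1,'h1,'v1,'s1) dblcat" and B :: "('o2,'h2,'v2,'s2) dblcat" +
  fixes F :: "('o1,'h1,'v1,'s1,'o2,'h2,'v2,'s2) dblfun"
  assumes FD: "is_dblfun A B F"
begin
lemmas q0 = FD[unfolded is_dblfun_def]
lemmas f1 = q0[THEN conjunct1]
lemmas q1 = q0[THEN conjunct2]
lemmas f2 = q1[THEN conjunct1]
lemmas q2 = q1[THEN conjunct2]
lemmas f3 = q2[THEN conjunct1]
lemmas q3 = q2[THEN conjunct2]
lemmas f4 = q3[THEN conjunct1]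
lemmas q4 = q3[THEN conjunct2]
lemmas f5 = q4[THEN conjunct1]
lemmas q5 = q4[THEN conjunct2]
lemmas f6 = q5[THEN conjunct1]
lemmas q6 = q5[THEN conjunct2]
lemmas f7 = q6[THEN conjunct1]
lemmas q7 = q6[THEN conjunct2]
lemmas f8 = q7[THEN conjunct1]
lemmas q8 = q7[THEN conjunct2]
lemmas f9 = q8[THEN conjunct1]
lemmas q9 = q8[THEN conjunct2]
lemmas f10 = q9[THEN conjunct1]
lemmas q10 = q9[THEN conjunct2]
lemmas f11 = q10

lemma fO: "x \<in> Obj A \<Longrightarrow> fO F x \<in> Obj B" using f1 by blast
lemma fH: "a \<in> Hor A \<Longrightarrow> fH F a \<in> Hor B" "a \<in> Hor A \<Longrightarrow> hdom B (fH F a) = fO F (hdom A a)"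
  "a \<in> Hor A \<Longrightarrow> hcod B (fH F a) = fO F (hcod A a)" using f2 by blast+
lemma fV: "u \<in> Ver A \<Longrightarrow> fV F u \<in> Ver B" "u \<in> Ver A \<Longrightarrow> vdom B (fV F u) = fO F (vdom A u)"
  "u \<in> Ver A \<Longrightarrow> vcod B (fV F u) = fO F (vcod A u)" using f3 by blast+
lemma fS: "\<alpha> \<in> Sq A \<Longrightarrow> fS F \<alpha> \<in> Sq B" "\<alpha> \<in> Sq A \<Longrightarrow> stop B (fS F \<alpha>) = fH F (stop A \<alpha>)"
  "\<alpha> \<in> Sq A \<Longrightarrow> sbot B (fS F \<alpha>) = fH F (sbot A \<alpha>)"
  "\<alpha> \<in> Sq A \<Longrightarrow> sleft B (fS F \<alpha>) = fV F (sleft A \<alpha>)"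
  "\<alpha> \<in> Sq A \<Longrightarrow> sright B (fS F \<alpha>) = fV F (sright A \<alpha>)" using f4 by blast+
lemma fid: "x \<in> Obj A \<Longrightarrow> fH F (hid A x) = hid B (fO F x)" "x \<in> Obj A \<Longrightarrow> fV F (vid A x) = vid B (fO F x)"
  using f5 by blast+
lemma fhcomp: "a \<in> Hor A \<Longrightarrow> b \<in> Hor A \<Longrightarrow> hcod A a = hdom A b \<Longrightarrow> fH F (hcomp A a b) = hcomp B (fH F a) (fH F b)"
  using f6 by blast
lemma fshid: "u \<in> Ver A \<Longrightarrow> fS F (shid A u) = shid B (fV F u)" using f8 by blast
lemma fsvid: "a \<in> Hor A \<Longrightarrow> fS F (svid A a) = svid B (fH F a)" using f9 by blast
lemma fshcomp: "\<alpha> \<in> Sq A \<Longrightarrow> \<beta> \<in> Sq A \<Longrightarrow> sright A \<alpha> = sleft A \<beta> \<Longrightarrow> fS F (shcomp A \<alpha> \<beta>) = shcomp B (fS F \<alpha>) (fS F \<beta>)"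
  using f10 by blast
lemma fsvcomp: "\<alpha> \<in> Sq A \<Longrightarrow> \<beta> \<in> Sq A \<Longrightarrow> sbot A \<alpha> = stop A \<beta> \<Longrightarrow> fS F (svcomp A \<alpha> \<beta>) = svcomp B (fS F \<alpha>) (fS F \<beta>)"
  using f11 by blast
lemmas fs = fO fH fV fS fid fhcomp fshid fsvid fshcomp fsvcomp

lemma funH: "fun2 (Hcat A) (Hcat B) (Hfun F)"
  unfolding fun2_def Hcat_def Hfun_def
  apply (simp only: twocat.simps twofun.simps mem_Collect_eq)
  apply (auto simp: fs A.sf)
  done

lemma vcell_map: "A.vcell \<alpha> \<beta> \<sigma>0 \<sigma>1 \<Longrightarrow> B.vcell (fS F \<alpha>) (fS F \<beta>) (fS F \<sigma>0) (fS F \<sigma>1)"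
  unfolding A.vcell_def B.vcell_def
  apply (elim conjE)
  apply (intro conjI)
  apply (simp_all add: fs A.sf)
  apply (metis fsvcomp)
  done

lemma Vfun_simps: "G0 (Vfun F) = fV F" "G1 (Vfun F) = fS F"
  "G2 (Vfun F) (\<alpha>,\<beta>,\<sigma>0,\<sigma>1) = (fS F \<alpha>, fS F \<beta>, fS F \<sigma>0, fS F \<sigma>1)"
  unfolding Vfun_def by simp_all

lemma funV: "fun2 (Vcat A) (Vcat B) (Vfun F)"
  unfolding fun2_def A.V_simps B.V_simps Vfun_simps
  apply (intro conjI)
  subgoal by (auto simp: fs)
  subgoal by (auto simp: fs)
  subgoal by (auto simp: vcell_map A.V_simps B.V_simps Vfun_simps A.vcell_def)
  subgoal by (auto simp: fs)
  subgoal by (auto simp: fs)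
  subgoal by (auto simp: fs A.sf A.V_simps B.V_simps Vfun_simps)
  subgoal by (auto simp: fs A.sf A.V_simps B.V_simps Vfun_simps A.vcell_def)
  done


lemma Hfun_simps: "G0 (Hfun F) = fO F" "G1 (Hfun F) = fH F" "G2 (Hfun F) = fS F"
  unfolding Hfun_def by simp_all

definition dt4 where "dt4 \<longleftrightarrow> (\<forall>u\<in>Ver A. \<forall>u'\<in>Ver A. \<forall>a\<in>Hor A. \<forall>c\<in>Hor A.
      hdom A a = vdom A u \<longrightarrow> hcod A a = vdom A u' \<longrightarrow>
      hdom A c = vcod A u \<longrightarrow> hcod A c = vcod A u' \<longrightarrow>
      (\<forall>\<beta>\<in>Sq B. sleft B \<beta> = fV F u \<longrightarrow> sright B \<beta> = fV F u' \<longrightarrow>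
         stop B \<beta> = fH F a \<longrightarrow> sbot B \<beta> = fH F c \<longrightarrow>
         (\<exists>!\<alpha>. \<alpha> \<in> Sq A \<and> sleft A \<alpha> = u \<and> sright A \<alpha> = u' \<and> stop A \<alpha> = a \<and> sbot A \<alpha> = c
               \<and> fS F \<alpha> = \<beta>)))"

lemma dt4I: assumes "dt4" "u \<in> Ver A" "u' \<in> Ver A" "a \<in> Hor A" "c \<in> Hor A"
  "hdom A a = vdom A u" "hcod A a = vdom A u'" "hdom A c = vcod A u" "hcod A c = vcod A u'"
  "\<beta> \<in> Sq B" "sleft B \<beta> = fV F u" "sright B \<beta> = fV F u'" "stop B \<beta> = fH F a" "sbot B \<beta> = fH F c"
  shows "\<exists>!\<alpha>. \<alpha> \<in> Sq A \<and> sleft A \<alpha> = u \<and> sright A \<alpha> = u' \<and> stop A \<alpha> = a \<and> sbot A \<alpha> = c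
               \<and> fS F \<alpha> = \<beta>"
  using assms unfolding dt4_def by blast

lemma ex1_uniq: "\<exists>!x. P x \<Longrightarrow> P a \<Longrightarrow> P b \<Longrightarrow> a = b" by blast

lemma dtf_iff: "double_trivial_fibration A B F \<longleftrightarrow>
   (\<forall>y\<in>Obj B. \<exists>x\<in>Obj A. fO F x = y) \<and>
   (\<forall>x\<in>Obj A. \<forall>z\<in>Obj A. \<forall>b\<in>Hor B. hdom B b = fO F x \<longrightarrow> hcod B b = fO F z \<longrightarrow>
      (\<exists>a\<in>Hor A. hdom A a = x \<and> hcod A a = z \<and> fH F a = b)) \<and>
   (\<forall>v\<in>Ver B. \<exists>u\<in>Ver A. fV F u = v) \<and> dt4"
  unfolding double_trivial_fibration_def dt4_def by (rule refl)

lemma SSH: "SSo (Hcat A) (Hcat B) (Hfun F) \<longleftrightarrow> (\<forall>y\<in>Obj B. \<exists>x\<in>Obj A. fO F x = y)"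
  unfolding SSo_def A.H_simps B.H_simps Hfun_simps by (rule refl)

lemma SFH: "SFm (Hcat A) (Hcat B) (Hfun F) \<longleftrightarrow> (\<forall>x\<in>Obj A. \<forall>z\<in>Obj A. \<forall>b\<in>Hor B. hdom B b = fO F x \<longrightarrow> hcod B b = fO F z \<longrightarrow>
      (\<exists>a\<in>Hor A. hdom A a = x \<and> hcod A a = z \<and> fH F a = b))"
  unfolding SFm_def is_mor_def A.H_simps B.H_simps Hfun_simps by blast

lemma SSV: "SSo (Vcat A) (Vcat B) (Vfun F) \<longleftrightarrow> (\<forall>v\<in>Ver B. \<exists>u\<in>Ver A. fV F u = v)"
  unfolding SSo_def A.V_simps B.V_simps Vfun_simps by (rule refl)

lemma FFH: assumes d4: "dt4" shows "FFc (Hcat A) (Hcat B) (Hfun F)"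
  unfolding FFc_def
proof (intro allI impI)
  fix f f' \<theta>
  assume f: "f \<in> TMor (Hcat A)" "f' \<in> TMor (Hcat A)" "mdom (Hcat A) f = mdom (Hcat A) f'"
     "mcod (Hcat A) f = mcod (Hcat A) f'" and th: "is_cell (Hcat B) \<theta> (G1 (Hfun F) f) (G1 (Hfun F) f')"
  have f1: "f \<in> Hor A" "f' \<in> Hor A" "hdom A f = hdom A f'" "hcod A f = hcod A f'"
    using f unfolding A.H_simps by auto
  have t1: "\<theta> \<in> Sq B" "sleft B \<theta> = vid B (hdom B (stop B \<theta>))" "sright B \<theta> = vid B (hcod B (stop B \<theta>))"
      "stop B \<theta> = fH F f" "sbot B \<theta> = fH F f'"
    using th unfolding is_cell_def B.H_simps Hfun_simps by auto
  have ob: "hdom A f \<in> Obj A" "hcod A f \<in> Obj A" using f1 A.hor_obj by auto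
  have U: "\<exists>!\<alpha>. \<alpha> \<in> Sq A \<and> sleft A \<alpha> = vid A (hdom A f) \<and> sright A \<alpha> = vid A (hcod A f) \<and> stop A \<alpha> = f \<and> sbot A \<alpha> = f'
               \<and> fS F \<alpha> = \<theta>"
    apply (rule dt4I[OF d4])
    using f1 ob t1 by (auto simp: A.sf fs)
  have eqv: "\<And>\<phi>. (is_cell (Hcat A) \<phi> f f' \<and> G2 (Hfun F) \<phi> = \<theta>) \<longleftrightarrow>
     (\<phi> \<in> Sq A \<and> sleft A \<phi> = vid A (hdom A f) \<and> sright A \<phi> = vid A (hcod A f) \<and> stop A \<phi> = f \<and> sbot A \<phi> = f'
               \<and> fS F \<phi> = \<theta>)"
    unfolding is_cell_def A.H_simps Hfun_simps by auto
  show "\<exists>!\<phi>. is_cell (Hcat A) \<phi> f f' \<and> G2 (Hfun F) \<phi> = \<theta>"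
    unfolding eqv by (rule U)
qed


lemma FFV: assumes d4: "dt4" shows "FFc (Vcat A) (Vcat B) (Vfun F)"
  unfolding FFc_def
proof (intro allI impI)
  fix f f' \<theta>
  assume f: "f \<in> TMor (Vcat A)" "f' \<in> TMor (Vcat A)" "mdom (Vcat A) f = mdom (Vcat A) f'"
     "mcod (Vcat A) f = mcod (Vcat A) f'" and th: "is_cell (Vcat B) \<theta> (G1 (Vfun F) f) (G1 (Vfun F) f')"
  have f1: "f \<in> Sq A" "f' \<in> Sq A" "sleft A f = sleft A f'" "sright A f = sright A f'"
    using f unfolding A.V_simps by auto
  obtain t1 t2 \<tau>0 \<tau>1 where tt: "\<theta> = (t1, t2, \<tau>0, \<tau>1)" by (cases \<theta>) auto
  have vc: "B.vcell (fS F f) (fS F f') \<tau>0 \<tau>1" and t12: "t1 = fS F f" "t2 = fS F f'"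
    using th unfolding tt is_cell_def B.V_simps Vfun_simps by auto
  note v = vc[unfolded B.vcell_def]
  have sf: "stop A f \<in> Hor A" "sbot A f \<in> Hor A" "stop A f' \<in> Hor A" "sbot A f' \<in> Hor A"
    "sleft A f \<in> Ver A" "sright A f \<in> Ver A"
    "hdom A (stop A f) = vdom A (sleft A f)" "hcod A (stop A f) = vdom A (sright A f)"
    "hdom A (sbot A f) = vcod A (sleft A f)" "hcod A (sbot A f) = vcod A (sright A f)"
    "hdom A (stop A f') = vdom A (sleft A f)" "hcod A (stop A f') = vdom A (sright A f)"
    "hdom A (sbot A f') = vcod A (sleft A f)" "hcod A (sbot A f') = vcod A (sright A f)"
    using A.sq[of f] A.sq[of f'] f1 by auto
  have ob: "hdom A (stop A f) \<in> Obj A" "hcod A (stop A f) \<in> Obj A"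
     "hdom A (sbot A f) \<in> Obj A" "hcod A (sbot A f) \<in> Obj A"
    using sf A.hor_obj A.ver_obj by auto
  define P0 where "P0 = (\<lambda>\<sigma>. \<sigma> \<in> Sq A \<and> sleft A \<sigma> = vid A (hdom A (stop A f)) \<and> sright A \<sigma> = vid A (hcod A (stop A f))
      \<and> stop A \<sigma> = stop A f \<and> sbot A \<sigma> = stop A f' \<and> fS F \<sigma> = \<tau>0)"
  define P1 where "P1 = (\<lambda>\<sigma>. \<sigma> \<in> Sq A \<and> sleft A \<sigma> = vid A (hdom A (sbot A f)) \<and> sright A \<sigma> = vid A (hcod A (sbot A f))
      \<and> stop A \<sigma> = sbot A f \<and> sbot A \<sigma> = sbot A f' \<and> fS F \<sigma> = \<tau>1)"
  have U0: "\<exists>!\<sigma>. P0 \<sigma>" unfolding P0_def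
    apply (rule dt4I[OF d4])
    using f1 ob sf v by (auto simp: A.sf fs)
  have U1: "\<exists>!\<sigma>. P1 \<sigma>" unfolding P1_def
    apply (rule dt4I[OF d4])
    using f1 ob sf v by (auto simp: A.sf fs)
  obtain \<sigma>0 where s0: "P0 \<sigma>0" using U0 by blast
  obtain \<sigma>1 where s1: "P1 \<sigma>1" using U1 by blast
  note s0' = s0[unfolded P0_def] and s1' = s1[unfolded P1_def]
  define E1 where "E1 = svcomp A \<sigma>0 f'"
  define E2 where "E2 = svcomp A f \<sigma>1"
  have E1p: "E1 \<in> Sq A" "sleft A E1 = sleft A f" "sright A E1 = sright A f" "stop A E1 = stop A f" "sbot A E1 = sbot A f'"
    "fS F E1 = svcomp B \<tau>0 (fS F f')"
    using A.svcomp[of \<sigma>0 f'] s0' f1 sf A.vunit fsvcomp[of \<sigma>0 f'] unfolding E1_def by auto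
  have E2p: "E2 \<in> Sq A" "sleft A E2 = sleft A f" "sright A E2 = sright A f" "stop A E2 = stop A f" "sbot A E2 = sbot A f'"
    "fS F E2 = svcomp B (fS F f) \<tau>1"
    using A.svcomp[of f \<sigma>1] s1' f1 sf A.vunit fsvcomp[of f \<sigma>1] unfolding E2_def by auto
  have UE: "\<exists>!\<alpha>. \<alpha> \<in> Sq A \<and> sleft A \<alpha> = sleft A f \<and> sright A \<alpha> = sright A f \<and> stop A \<alpha> = stop A f
     \<and> sbot A \<alpha> = sbot A f' \<and> fS F \<alpha> = fS F E1"
    apply (rule dt4I[OF d4])
    using f1 sf E1p(1-5) by (auto simp: fs)
  have "E1 = E2" using ex1_uniq[OF UE] E1p E2p v by auto
  then have vA: "A.vcell f f' \<sigma>0 \<sigma>1" unfolding A.vcell_def E1_def E2_def using f1 s0' s1' by auto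
  show "\<exists>!\<phi>. is_cell (Vcat A) \<phi> f f' \<and> G2 (Vfun F) \<phi> = \<theta>"
  proof (rule ex1I[of _ "(f, f', \<sigma>0, \<sigma>1)"])
    show "is_cell (Vcat A) (f, f', \<sigma>0, \<sigma>1) f f' \<and> G2 (Vfun F) (f, f', \<sigma>0, \<sigma>1) = \<theta>"
      unfolding is_cell_def A.V_simps Vfun_simps tt using vA s0' s1' t12 by auto
  next
    fix \<phi> assume ph: "is_cell (Vcat A) \<phi> f f' \<and> G2 (Vfun F) \<phi> = \<theta>"
    obtain p1 p2 \<rho>0 \<rho>1 where pp: "\<phi> = (p1, p2, \<rho>0, \<rho>1)" by (cases \<phi>) auto
    have pv: "A.vcell f f' \<rho>0 \<rho>1" "p1 = f" "p2 = f'" "fS F \<rho>0 = \<tau>0" "fS F \<rho>1 = \<tau>1"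
      using ph unfolding pp is_cell_def A.V_simps Vfun_simps tt by auto
    have "P0 \<rho>0" unfolding P0_def using pv unfolding A.vcell_def by auto
    then have "\<rho>0 = \<sigma>0" using ex1_uniq[OF U0] s0 by blast
    moreover have "P1 \<rho>1" unfolding P1_def using pv unfolding A.vcell_def by auto
    then have "\<rho>1 = \<sigma>1" using ex1_uniq[OF U1] s1 by blast
    ultimately show "\<phi> = (f, f', \<sigma>0, \<sigma>1)" using pp pv by auto
  qed
qed


lemma SFV: assumes d2: "\<forall>x\<in>Obj A. \<forall>z\<in>Obj A. \<forall>b\<in>Hor B. hdom B b = fO F x \<longrightarrow> hcod B b = fO F z \<longrightarrow>
      (\<exists>a\<in>Hor A. hdom A a = x \<and> hcod A a = z \<and> fH F a = b)" and d4: "dt4"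
  shows "SFm (Vcat A) (Vcat B) (Vfun F)"
  unfolding SFm_def
proof (intro ballI allI impI)
  fix u u' g assume u: "u \<in> TObj (Vcat A)" "u' \<in> TObj (Vcat A)"
    and g: "is_mor (Vcat B) g (G0 (Vfun F) u) (G0 (Vfun F) u')"
  have u1: "u \<in> Ver A" "u' \<in> Ver A" using u unfolding A.V_simps by auto
  have g1: "g \<in> Sq B" "sleft B g = fV F u" "sright B g = fV F u'"
    using g unfolding is_mor_def B.V_simps Vfun_simps by auto
  have ob: "vdom A u \<in> Obj A" "vcod A u \<in> Obj A" "vdom A u' \<in> Obj A" "vcod A u' \<in> Obj A"
    using u1 A.ver_obj by auto
  have gs: "stop B g \<in> Hor B" "hdom B (stop B g) = fO F (vdom A u)" "hcod B (stop B g) = fO F (vdom A u')"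
    "sbot B g \<in> Hor B" "hdom B (sbot B g) = fO F (vcod A u)" "hcod B (sbot B g) = fO F (vcod A u')"
    using B.sq[of g] g1 u1 fV by auto
  obtain a where a: "a \<in> Hor A" "hdom A a = vdom A u" "hcod A a = vdom A u'" "fH F a = stop B g"
    using d2 ob gs by blast
  obtain c where c: "c \<in> Hor A" "hdom A c = vcod A u" "hcod A c = vcod A u'" "fH F c = sbot B g"
    using d2 ob gs by blast
  have "\<exists>!\<alpha>. \<alpha> \<in> Sq A \<and> sleft A \<alpha> = u \<and> sright A \<alpha> = u' \<and> stop A \<alpha> = a \<and> sbot A \<alpha> = c
               \<and> fS F \<alpha> = g"
    apply (rule dt4I[OF d4]) using u1 a c g1 by auto
  then obtain \<alpha> where "\<alpha> \<in> Sq A" "sleft A \<alpha> = u" "sright A \<alpha> = u'" "fS F \<alpha> = g" by blast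
  then show "\<exists>f. is_mor (Vcat A) f u u' \<and> G1 (Vfun F) f = g"
    unfolding is_mor_def A.V_simps Vfun_simps by blast
qed

lemma DT4: assumes FH: "FFc (Hcat A) (Hcat B) (Hfun F)" and SV: "SFm (Vcat A) (Vcat B) (Vfun F)"
  and FV: "FFc (Vcat A) (Vcat B) (Vfun F)"
  shows "dt4"
  unfolding dt4_def
proof (intro ballI impI)
  fix u u' a c \<beta>
  assume u: "u \<in> Ver A" "u' \<in> Ver A" and ac: "a \<in> Hor A" "c \<in> Hor A"
    and e: "hdom A a = vdom A u" "hcod A a = vdom A u'" "hdom A c = vcod A u" "hcod A c = vcod A u'"
    and b: "\<beta> \<in> Sq B" "sleft B \<beta> = fV F u" "sright B \<beta> = fV F u'" "stop B \<beta> = fH F a" "sbot B \<beta> = fH F c"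
  have FHx: "\<And>f f' \<theta>. f \<in> Hor A \<Longrightarrow> f' \<in> Hor A \<Longrightarrow> hdom A f = hdom A f' \<Longrightarrow> hcod A f = hcod A f' \<Longrightarrow>
     \<theta> \<in> Sq B \<Longrightarrow> sleft B \<theta> = vid B (hdom B (stop B \<theta>)) \<Longrightarrow> sright B \<theta> = vid B (hcod B (stop B \<theta>)) \<Longrightarrow>
     stop B \<theta> = fH F f \<Longrightarrow> sbot B \<theta> = fH F f' \<Longrightarrow>
     \<exists>!\<phi>. (\<phi> \<in> Sq A \<and> sleft A \<phi> = vid A (hdom A (stop A \<phi>)) \<and> sright A \<phi> = vid A (hcod A (stop A \<phi>))) \<and>
        stop A \<phi> = f \<and> sbot A \<phi> = f' \<and> fS F \<phi> = \<theta>"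
    using FH unfolding FFc_def is_cell_def A.H_simps B.H_simps Hfun_simps by auto
  have svB: "\<And>x. x \<in> Hor A \<Longrightarrow> svid B (fH F x) \<in> Sq B \<and>
       sleft B (svid B (fH F x)) = vid B (hdom B (stop B (svid B (fH F x)))) \<and>
       sright B (svid B (fH F x)) = vid B (hcod B (stop B (svid B (fH F x)))) \<and>
       stop B (svid B (fH F x)) = fH F x \<and> sbot B (svid B (fH F x)) = fH F x"
    using B.svid fH by auto
  have svA: "\<And>x. x \<in> Hor A \<Longrightarrow> (svid A x \<in> Sq A \<and> sleft A (svid A x) = vid A (hdom A (stop A (svid A x))) \<and>
       sright A (svid A x) = vid A (hcod A (stop A (svid A x)))) \<and>
       stop A (svid A x) = x \<and> sbot A (svid A x) = x \<and> fS F (svid A x) = svid B (fH F x)"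
    using A.svid fsvid by auto
  have "is_mor (Vcat B) \<beta> (G0 (Vfun F) u) (G0 (Vfun F) u')"
    unfolding is_mor_def B.V_simps Vfun_simps using b by auto
  then obtain \<alpha> where al: "\<alpha> \<in> Sq A" "sleft A \<alpha> = u" "sright A \<alpha> = u'" "fS F \<alpha> = \<beta>"
    using SV u unfolding SFm_def is_mor_def A.V_simps Vfun_simps by blast
  have as: "stop A \<alpha> \<in> Hor A" "sbot A \<alpha> \<in> Hor A" "hdom A (stop A \<alpha>) = vdom A u" "hcod A (stop A \<alpha>) = vdom A u'"
     "hdom A (sbot A \<alpha>) = vcod A u" "hcod A (sbot A \<alpha>) = vcod A u'"
     "fH F (stop A \<alpha>) = fH F a" "fH F (sbot A \<alpha>) = fH F c"
    using A.sq[of \<alpha>] al b fS[of \<alpha>] by auto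
  obtain \<tau>0 where t0: "\<tau>0 \<in> Sq A" "sleft A \<tau>0 = vid A (hdom A (stop A \<tau>0))" "sright A \<tau>0 = vid A (hcod A (stop A \<tau>0))"
     "stop A \<tau>0 = a" "sbot A \<tau>0 = stop A \<alpha>" "fS F \<tau>0 = svid B (fH F a)"
    using FHx[OF ac(1) as(1) _ _ _ _ _ _ , of "svid B (fH F a)"] svB[OF ac(1)] e as by auto
  obtain \<sigma>1 where s1: "\<sigma>1 \<in> Sq A" "sleft A \<sigma>1 = vid A (hdom A (stop A \<sigma>1))" "sright A \<sigma>1 = vid A (hcod A (stop A \<sigma>1))"
     "stop A \<sigma>1 = sbot A \<alpha>" "sbot A \<sigma>1 = c" "fS F \<sigma>1 = svid B (fH F c)"
    using FHx[OF as(2) ac(2) _ _ _ _ _ _ , of "svid B (fH F c)"] svB[OF ac(2)] e as by auto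
  define I where "I = svcomp A \<alpha> \<sigma>1"
  have Ip: "I \<in> Sq A" "stop A I = stop A \<alpha>" "sbot A I = c" "sleft A I = u" "sright A I = u'"
      "fS F I = svcomp B \<beta> (svid B (fH F c))"
    using A.svcomp[of \<alpha> \<sigma>1] al s1 as A.vunit u fsvcomp[of \<alpha> \<sigma>1] unfolding I_def by auto
  define \<alpha>' where "\<alpha>' = svcomp A \<tau>0 I"
  have ap: "\<alpha>' \<in> Sq A" "stop A \<alpha>' = a" "sbot A \<alpha>' = c" "sleft A \<alpha>' = u" "sright A \<alpha>' = u'"
      "fS F \<alpha>' = svcomp B (svid B (fH F a)) (svcomp B \<beta> (svid B (fH F c)))"
    using A.svcomp[of \<tau>0 I] Ip t0 e A.vunit u fsvcomp[of \<tau>0 I] unfolding \<alpha>'_def by auto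
  have "svcomp B (svid B (fH F a)) (svcomp B \<beta> (svid B (fH F c))) = \<beta>"
    using B.svunit[of \<beta>] b by auto
  then have ex: "\<alpha>' \<in> Sq A \<and> sleft A \<alpha>' = u \<and> sright A \<alpha>' = u' \<and> stop A \<alpha>' = a \<and> sbot A \<alpha>' = c \<and> fS F \<alpha>' = \<beta>"
    using ap by auto
  have un: "\<alpha>1 = \<alpha>2" if h1: "\<alpha>1 \<in> Sq A \<and> sleft A \<alpha>1 = u \<and> sright A \<alpha>1 = u' \<and> stop A \<alpha>1 = a \<and> sbot A \<alpha>1 = c \<and> fS F \<alpha>1 = \<beta>"
    and h2: "\<alpha>2 \<in> Sq A \<and> sleft A \<alpha>2 = u \<and> sright A \<alpha>2 = u' \<and> stop A \<alpha>2 = a \<and> sbot A \<alpha>2 = c \<and> fS F \<alpha>2 = \<beta>"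
    for \<alpha>1 \<alpha>2
  proof -
    have cB: "is_cell (Vcat B) (\<beta>, \<beta>, svid B (stop B \<beta>), svid B (sbot B \<beta>)) (G1 (Vfun F) \<alpha>1) (G1 (Vfun F) \<alpha>2)"
      unfolding is_cell_def B.V_simps Vfun_simps using B.vcell_cid[OF b(1)] h1 h2 by auto
    obtain \<phi> where ph: "is_cell (Vcat A) \<phi> \<alpha>1 \<alpha>2" "G2 (Vfun F) \<phi> = (\<beta>, \<beta>, svid B (stop B \<beta>), svid B (sbot B \<beta>))"
      using FV h1 h2 cB unfolding FFc_def A.V_simps by (metis (no_types, lifting))
    obtain p1 p2 \<rho>0 \<rho>1 where pp: "\<phi> = (p1, p2, \<rho>0, \<rho>1)" by (cases \<phi>) auto
    have pv: "A.vcell \<alpha>1 \<alpha>2 \<rho>0 \<rho>1" "fS F \<rho>0 = svid B (fH F a)" "fS F \<rho>1 = svid B (fH F c)"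
      using ph b unfolding pp is_cell_def A.V_simps Vfun_simps by auto
    note pv' = pv(1)[unfolded A.vcell_def]
    have U0: "\<exists>!\<phi>. (\<phi> \<in> Sq A \<and> sleft A \<phi> = vid A (hdom A (stop A \<phi>)) \<and> sright A \<phi> = vid A (hcod A (stop A \<phi>))) \<and>
        stop A \<phi> = a \<and> sbot A \<phi> = a \<and> fS F \<phi> = svid B (fH F a)"
      using FHx[OF ac(1) ac(1)] svB[OF ac(1)] by auto
    have U1: "\<exists>!\<phi>. (\<phi> \<in> Sq A \<and> sleft A \<phi> = vid A (hdom A (stop A \<phi>)) \<and> sright A \<phi> = vid A (hcod A (stop A \<phi>))) \<and>
        stop A \<phi> = c \<and> sbot A \<phi> = c \<and> fS F \<phi> = svid B (fH F c)"
      using FHx[OF ac(2) ac(2)] svB[OF ac(2)] by auto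
    have r0: "\<rho>0 = svid A a"
      by (rule ex1_uniq[OF U0]) (use pv pv' h1 h2 svA[OF ac(1)] in auto)
    have r1: "\<rho>1 = svid A c"
      by (rule ex1_uniq[OF U1]) (use pv pv' h1 h2 svA[OF ac(2)] in auto)
    have "\<alpha>2 = svcomp A (svid A a) \<alpha>2" using A.svunit[of \<alpha>2] h2 by auto
    also have "\<dots> = svcomp A \<alpha>1 (svid A c)" using pv' r0 r1 by auto
    also have "\<dots> = \<alpha>1" using A.svunit[of \<alpha>1] h1 by auto
    finally show ?thesis by simp
  qed
  show "\<exists>!\<alpha>. \<alpha> \<in> Sq A \<and> sleft A \<alpha> = u \<and> sright A \<alpha> = u' \<and> stop A \<alpha> = a \<and> sbot A \<alpha> = c \<and> fS F \<alpha> = \<beta>"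
    using ex un by blast
qed

lemma main: "double_trivial_fibration A B F \<longleftrightarrow>
         lack_trivial_fibration (Hcat A) (Hcat B) (Hfun F) \<and>
         lack_trivial_fibration (Vcat A) (Vcat B) (Vfun F)"
  unfolding abstract_main[OF A.wfH B.wfH funH] abstract_main[OF A.wfV B.wfV funV]
    dtf_iff SSH SFH SSV
  using FFH FFV SFV DT4 by blast

end


theorem corollary3p14:
  fixes A :: "('o1,'h1,'v1,'s1) dblcat" and B :: "('o2,'h2,'v2,'s2) dblcat"
    and F :: "('o1,'h1,'v1,'s1,'o2,'h2,'v2,'s2) dblfun"
  assumes "is_dblcat A" and "is_dblcat B" and "is_dblfun A B F"
  shows "double_trivial_fibration A B F \<longleftrightarrow>
         lack_trivial_fibration (Hcat A) (Hcat B) (Hfun F) \<and>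
         lack_trivial_fibration (Vcat A) (Vcat B) (Vfun F)"
proof -
  interpret dfun A B F
    by unfold_locales (rule assms(1), rule assms(2), rule assms(3))
  show ?thesis by (rule main)
qed

end
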